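(* Let $\ell$ be a generic length vector of length $n\ge4$, $m=n-3$, and suppose $R^m\neq0$ in $H^m(\overline{M}(\ell))$. If $m$ is a power of $2$, then $\overline{R}^{\,2m-1}\neq0$ in $H^{2m-1}(\overline{M}(\ell)\times\overline{M}(\ell))$. If $m$ is not a power of $2$ and $\ell$ has a nonempty gee, then there exist positive integers $t$ and $A$ and distinct $i_1,\ldots,i_{t+1}\in[\![n-1]\!]$ such that $$\overline{V_{i_1}}\cdots\overline{V_{i_t}}\,\overline{V_{i_{t+1}}}^{\,A}\,\overline{R}^{\,2m-A-t-1}\neq0\in H^{2m-1}(\overline{M}(\ell)\times\overline{M}(\ell)).$$ Hence in either case $\mathrm{TC}(\overline{M}(\ell))\ge 2m=2n-6$.
   Context: A generic length vector $\ell=(\ell_1,\ldots,\ell_n)$: positive reals, $\ell_1\le\cdots\le\ell_n<\ell_1+\cdots+\ell_{n-1}$, with no $S\subset[\![n]\!]=\{1,\ldots,n\}$ having $\sum_{i\in S}\ell_i=\sum_{i\notin S}\ell_i$. $\overline{M}(\ell)=\{(z_1,\ldots,z_n)\in(S^1)^n:\sum\ell_iz_i=0\}/O(2)$, a closed connected $m$-manifold, $m=n-3$. $S\subset[\![n]\!]$ is short if $\sum_{i\in S}\ell_i<\sum_{i\notin S}\ell_i$; a subgee is a set $S\subset[\![n-1]\!]$ with $S\cup\{n\}$ short; gees are the maximal subgees (equivalently, the maximal short sets containing $n$, with $n$ removed). All cohomology has $\mathbb{Z}_2$ coefficients. By Hausmann–Knudsen, $H^*(\overline{M}(\ell))$ is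 generated by $R,V_1,\ldots,V_{n-1}\in H^1$ subject only to: (i) all monomials of the same degree divisible by exactly the same set of $V_i$'s are equal; writing $V_S=\prod_{i\in S}V_i$, the classes $R^{d-|S|}V_S$ span $H^d$; (ii) $V_S=0$ unless $S$ is a subgee; (iii) for each subgee $S$ with $|S|\ge n-2-d$, $\sum_{T}R^{d-|T|}V_T=0$ in $H^d$, summed over $T\subset[\![n-1]\!]$, $|T|\le d$, $T\cap S=\emptyset$. For $z\in H^1$, $\overline{z}=z\otimes1+1\otimes z$. $\mathrm{TC}$ is Farber's non-reduced topological complexity (contractible spaces have $\mathrm{TC}=1$). *)

theory Defs
  imports Complex_Main
begin

definition generic_length_vector :: "nat \<Rightarrow> (nat \<Rightarrow> real) \<Rightarrow> bool" where
  "generic_length_vector n l \<longleftrightarrow>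
     (\<forall>i\<in>{1..n}. 0 < l i) \<and>
     (\<forall>i j. 1 \<le> i \<longrightarrow> i \<le> j \<longrightarrow> j \<le> n \<longrightarrow> l i \<le> l j) \<and>
     l n < (\<Sum>i\<in>{1..n-1}. l i) \<and>
     (\<forall>S. S \<subseteq> {1..n} \<longrightarrow> (\<Sum>i\<in>S. l i) \<noteq> (\<Sum>i\<in>{1..n} - S. l i))"

definition short_set :: "nat \<Rightarrow> (nat \<Rightarrow> real) \<Rightarrow> nat set \<Rightarrow> bool" where
  "short_set n l S \<longleftrightarrow> S \<subseteq> {1..n} \<and> (\<Sum>i\<in>S. l i) < (\<Sum>i\<in>{1..n} - S. l i)"

definition subgee :: "nat \<Rightarrow> (nat \<Rightarrow> real) \<Rightarrow> nat set \<Rightarrow> bool" where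
  "subgee n l S \<longleftrightarrow> S \<subseteq> {1..n-1} \<and> short_set n l (insert n S)"

definition gee :: "nat \<Rightarrow> (nat \<Rightarrow> real) \<Rightarrow> nat set \<Rightarrow> bool" where
  "gee n l S \<longleftrightarrow> subgee n l S \<and> (\<forall>T. subgee n l T \<longrightarrow> S \<subseteq> T \<longrightarrow> T = S)"

section \<open>Z2-vector spaces as finite sets (symmetric difference = addition)\<close>

inductive_set zspan :: "'a set set \<Rightarrow> 'a set set" for G :: "'a set set" where
  zspan_zero: "{} \<in> zspan G"
| zspan_add: "g \<in> G \<Longrightarrow> v \<in> zspan G \<Longrightarrow> (g - v) \<union> (v - g) \<in> zspan G"

section \<open>The Hausmann--Knudsen presentation of H^*(Mbar(l); Z2)\<close>

text \<open>A monomial basis element (d,S) of the free space in degree d stands for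
  R^(d-|S|) V_S, with S a subset of {1..n-1} and |S| <= d.  By relation (i) every
  monomial of degree d in R, V_1, ..., V_(n-1) divisible by exactly the V_i with i in S
  equals this one.  A class is an element of the free Z2-space, i.e. a finite set of
  such basis elements.\<close>

definition HK_basis :: "nat \<Rightarrow> (nat \<times> nat set) set" where
  "HK_basis n = {(d, S). S \<subseteq> {1..n-1} \<and> card S \<le> d}"

text \<open>Relations (ii) and (iii), in every degree d.\<close>
definition HK_relations :: "nat \<Rightarrow> (nat \<Rightarrow> real) \<Rightarrow> (nat \<times> nat set) set set" where
  "HK_relations n l =
     {{(d, S)} | d S. (d, S) \<in> HK_basis n \<and> \<not> subgee n l S} \<union>
     {{(d, T) | T. (d, T) \<in> HK_basis n \<and> T \<inter> S = {}} | d S.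
         subgee n l S \<and> n \<le> card S + d + 2}"

definition HK_zero :: "nat \<Rightarrow> (nat \<Rightarrow> real) \<Rightarrow> (nat \<times> nat set) set \<Rightarrow> bool" where
  "HK_zero n l x \<longleftrightarrow> x \<in> zspan (HK_relations n l)"

section \<open>H^*(Mbar) \<otimes> H^*(Mbar) = H^*(Mbar \<times> Mbar) (Kuenneth)\<close>

text \<open>An element of the free tensor product is a finite set of pairs of basis elements;
  it is zero in H \<otimes> H iff it lies in Rel \<otimes> F + F \<otimes> Rel.\<close>
definition tensor_relations :: "nat \<Rightarrow> (nat \<Rightarrow> real) \<Rightarrow>
    ((nat \<times> nat set) \<times> (nat \<times> nat set)) set set" where
  "tensor_relations n l =
     {r \<times> {b} | r b. r \<in> HK_relations n l \<and> b \<in> HK_basis n} \<union>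
     {{b} \<times> r | r b. r \<in> HK_relations n l \<and> b \<in> HK_basis n}"

definition tensor_zero :: "nat \<Rightarrow> (nat \<Rightarrow> real) \<Rightarrow>
    ((nat \<times> nat set) \<times> (nat \<times> nat set)) set \<Rightarrow> bool" where
  "tensor_zero n l x \<longleftrightarrow> x \<in> zspan (tensor_relations n l)"

text \<open>Generators: None = R, Some i = V_i.  A word w denotes the product of the
  barred generators  zbar = z \<otimes> 1 + 1 \<otimes> z.  Expanding, the product equals the sum over
  J \<subseteq> positions of (prod_{j in J} w_j) \<otimes> (prod_{j notin J} w_j).\<close>

definition vidx :: "nat option list \<Rightarrow> nat set \<Rightarrow> nat set" where
  "vidx w J = {i. \<exists>j\<in>J. j < length w \<and> w ! j = Some i}"

definition split_mon :: "nat option list \<Rightarrow> nat set \<Rightarrow> (nat \<times> nat set) \<times> (nat \<times> nat set)" where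
  "split_mon w J = ((card J, vidx w J), (length w - card J, vidx w ({..<length w} - J)))"

definition barprod :: "nat option list \<Rightarrow> ((nat \<times> nat set) \<times> (nat \<times> nat set)) set" where
  "barprod w = {x. odd (card {J. J \<subseteq> {..<length w} \<and> split_mon w J = x})}"

end

theory Submission
  imports Defs
begin


section \<open>Z2 linear algebra\<close>

lemma card_symdiff:
  assumes "finite A" "finite B"
  shows "card ((A - B) \<union> (B - A)) + 2 * card (A \<inter> B) = card A + card B"
proof -
  have d: "(A - B) \<inter> (B - A) = {}" by blast
  have "card ((A - B) \<union> (B - A)) = card (A - B) + card (B - A)"
    using assms d by (simp add: card_Un_disjoint)
  moreover have "card A = card (A - B) + card (A \<inter> B)"
  proof -
    have "A = (A - B) \<union> (A \<inter> B)" by blast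
    moreover have "(A - B) \<inter> (A \<inter> B) = {}" by blast
    ultimately show ?thesis using assms by (metis card_Un_disjoint finite_Diff finite_Int)
  qed
  moreover have "card B = card (B - A) + card (A \<inter> B)"
  proof -
    have "B = (B - A) \<union> (A \<inter> B)" by blast
    moreover have "(B - A) \<inter> (A \<inter> B) = {}" by blast
    ultimately show ?thesis using assms by (metis card_Un_disjoint finite_Diff finite_Int)
  qed
  ultimately show ?thesis by simp
qed

lemma zspan_functional:
  assumes G: "\<And>g. g \<in> G \<Longrightarrow> finite g \<and> even (card (g \<inter> F))"
  shows "v \<in> zspan G \<Longrightarrow> finite v \<and> even (card (v \<inter> F))"
proof (induction rule: zspan.induct)
  case zspan_zero
  then show ?case by simp
next
  case (zspan_add g v)
  have fg: "finite g" and eg: "even (card (g \<inter> F))" using G zspan_add.hyps(1) by auto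
  have fv: "finite v" and ev: "even (card (v \<inter> F))" using zspan_add.IH by auto
  have eq: "((g - v) \<union> (v - g)) \<inter> F = ((g \<inter> F) - (v \<inter> F)) \<union> ((v \<inter> F) - (g \<inter> F))" by blast
  have "card (((g \<inter> F) - (v \<inter> F)) \<union> ((v \<inter> F) - (g \<inter> F))) + 2 * card ((g \<inter> F) \<inter> (v \<inter> F))
        = card (g \<inter> F) + card (v \<inter> F)"
    using fg fv by (intro card_symdiff) auto
  then have "even (card (((g \<inter> F) - (v \<inter> F)) \<union> ((v \<inter> F) - (g \<inter> F))))"
    using eg ev by presburger
  then show ?case using fg fv eq by auto
qed

lemma zspan_symdiff:
  assumes "u \<in> zspan G" "v \<in> zspan G"
  shows "(u - v) \<union> (v - u) \<in> zspan G"
  using assms(1)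
proof (induction rule: zspan.induct)
  case zspan_zero
  then show ?case using assms(2) by simp
next
  case (zspan_add g w)
  have "(((g - w) \<union> (w - g)) - v) \<union> (v - ((g - w) \<union> (w - g)))
        = (g - ((w - v) \<union> (v - w))) \<union> (((w - v) \<union> (v - w)) - g)" by blast
  then show ?case using zspan.zspan_add[OF zspan_add.hyps(1) zspan_add.IH] by simp
qed

definition xsumi :: "('i \<Rightarrow> 'a set) \<Rightarrow> 'i set \<Rightarrow> 'a set" where
  "xsumi g I = {p. odd (card {i\<in>I. p \<in> g i})}"

lemma xsumi_zspan:
  assumes "finite I" "\<And>i. i \<in> I \<Longrightarrow> g i \<in> zspan G"
  shows "xsumi g I \<in> zspan G"
  using assms
proof (induction I rule: finite_induct)
  case empty
  then show ?case by (simp add: xsumi_def zspan.zspan_zero)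
next
  case (insert i I)
  have eq: "xsumi g (insert i I) = (g i - xsumi g I) \<union> (xsumi g I - g i)"
  proof (rule set_eqI)
    fix p
    have "{j\<in>insert i I. p \<in> g j} = (if p \<in> g i then insert i {j\<in>I. p \<in> g j} else {j\<in>I. p \<in> g j})"
      by auto
    moreover have "i \<notin> {j\<in>I. p \<in> g j}" using insert.hyps by auto
    moreover have "finite {j\<in>I. p \<in> g j}" using insert.hyps by auto
    ultimately show "p \<in> xsumi g (insert i I) \<longleftrightarrow> p \<in> (g i - xsumi g I) \<union> (xsumi g I - g i)"
      unfolding xsumi_def by auto
  qed
  show ?case unfolding eq
    by (rule zspan_symdiff) (use insert in auto)
qed



lemma parity_count:
  assumes "finite A"
  shows "even (card {x\<in>A. odd (h x :: nat)}) \<longleftrightarrow> even (\<Sum>x\<in>A. h x)"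
  using assms
proof (induction A rule: finite_induct)
  case empty
  then show ?case by simp
next
  case (insert a A)
  have "{x\<in>insert a A. odd (h x)} = (if odd (h a) then insert a {x\<in>A. odd (h x)} else {x\<in>A. odd (h x)})"
    by auto
  moreover have "a \<notin> {x\<in>A. odd (h x)}" using insert by auto
  moreover have "finite {x\<in>A. odd (h x)}" using insert by auto
  ultimately show ?case using insert by auto
qed

lemma parity_image_count:
  assumes "finite D"
  shows "even (card ({x. odd (card {J\<in>D. h J = x})} \<inter> F)) \<longleftrightarrow> even (card {J\<in>D. h J \<in> F})"
proof -
  let ?X = "h ` D \<inter> F"
  have fX: "finite ?X" using assms by auto
  have "card {J\<in>D. h J \<in> F} = card (\<Union>x\<in>?X. {J\<in>D. h J = x})"
    by (rule arg_cong[where f=card]) auto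
  also have "\<dots> = (\<Sum>x\<in>?X. card {J\<in>D. h J = x})"
    by (rule card_UN_disjoint) (use assms fX in auto)
  finally have c: "card {J\<in>D. h J \<in> F} = (\<Sum>x\<in>?X. card {J\<in>D. h J = x})" .
  have "{x. odd (card {J\<in>D. h J = x})} \<inter> F = {x\<in>?X. odd (card {J\<in>D. h J = x})}"
  proof (rule set_eqI, rule iffI)
    fix x assume "x \<in> {x. odd (card {J\<in>D. h J = x})} \<inter> F"
    then have o: "odd (card {J\<in>D. h J = x})" and "x \<in> F" by auto
    then have "{J\<in>D. h J = x} \<noteq> {}" by (metis card.empty even_zero)
    then show "x \<in> {x\<in>?X. odd (card {J\<in>D. h J = x})}" using o \<open>x\<in>F\<close> by auto
  qed auto
  then show ?thesis using c parity_count[OF fX, of "\<lambda>x. card {J\<in>D. h J = x}"] by simp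
qed



section \<open>Binomial parity\<close>

lemma pow2_odd_decomp:
  fixes j :: nat
  assumes "0 < j"
  shows "\<exists>a o'. j = 2 ^ a * o' \<and> odd o'"
  using assms
proof (induction j rule: less_induct)
  case (less j)
  show ?case
  proof (cases "odd j")
    case True
    then show ?thesis by (intro exI[of _ 0] exI[of _ j]) simp
  next
    case False
    then obtain k where k: "j = 2 * k" by auto
    then have "0 < k" "k < j" using less.prems by auto
    then obtain a o' where "k = 2 ^ a * o'" "odd o'" using less.IH by blast
    then show ?thesis using k by (intro exI[of _ "Suc a"] exI[of _ o']) simp
  qed
qed

lemma even_choose_pow2:
  assumes "0 < j" "j < 2 ^ k"
  shows "even ((2 ^ k) choose j)"
proof -
  obtain a o' where jd: "j = 2 ^ a * o'" "odd o'" using pow2_odd_decomp assms(1) by blast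
  have "a < k"
  proof (rule ccontr)
    assume "\<not> a < k"
    then have "2 ^ k \<le> (2::nat) ^ a" by simp
    moreover have "o' \<ge> 1" using jd(2) by (cases o') auto
    ultimately have "2 ^ k \<le> j" using jd(1) by (metis dual_order.trans mult_le_mono2 nat_mult_1_right)
    then show False using assms(2) by simp
  qed
  obtain i where ji: "j = Suc i" using assms(1) by (cases j) auto
  have "j * ((2 ^ k) choose j) = 2 ^ k * ((2 ^ k - 1) choose i)"
    using binomial_absorption[of i "2^k"] ji by simp
  then have "2 ^ a * (o' * ((2 ^ k) choose j)) = 2 ^ a * (2 ^ (k - a) * ((2 ^ k - 1) choose i))"
    using jd(1) \<open>a < k\<close> by (simp add: power_add[symmetric] mult.assoc)
  then have "o' * ((2 ^ k) choose j) = 2 ^ (k - a) * ((2 ^ k - 1) choose i)" by simp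
  moreover have "even (2 ^ (k - a) :: nat)" using \<open>a < k\<close> by simp
  ultimately have "even (o' * ((2 ^ k) choose j))" by (metis dvd_mult2)
  then show ?thesis using jd(2) by simp
qed

lemma odd_choose_pow2_minus1:
  assumes "j \<le> 2 ^ k - 1"
  shows "odd ((2 ^ k - 1) choose j)"
  using assms
proof (induction j)
  case 0
  then show ?case by simp
next
  case (Suc j)
  have "0 < (2::nat) ^ k" by simp
  then have e: "(2::nat) ^ k = Suc (2 ^ k - 1)" by simp
  have "(2 ^ k choose Suc j) = ((2 ^ k - 1) choose j) + ((2 ^ k - 1) choose Suc j)"
    by (subst e) (simp only: binomial_Suc_Suc)
  moreover have "even (2 ^ k choose Suc j)" using Suc.prems by (intro even_choose_pow2) auto
  moreover have "odd ((2 ^ k - 1) choose j)" using Suc by simp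
  ultimately show ?case by presburger
qed




section \<open>Geometry of subgees\<close>

lemma gen_pos: "generic_length_vector n l \<Longrightarrow> i \<in> {1..n} \<Longrightarrow> 0 < l i"
  unfolding generic_length_vector_def by blast

lemma gen_mono: "generic_length_vector n l \<Longrightarrow> 1 \<le> i \<Longrightarrow> i \<le> n \<Longrightarrow> l i \<le> l n"
  unfolding generic_length_vector_def by blast

lemma subgee_iff:
  assumes "1 \<le> n"
  shows "subgee n l S \<longleftrightarrow> S \<subseteq> {1..n-1} \<and> l n + sum l S < sum l ({1..n-1} - S)"
proof (cases "S \<subseteq> {1..n-1}")
  case True
  have fin: "finite S" by (rule finite_subset[OF True]) simp
  have nS: "n \<notin> S" using True assms by auto
  have s1: "{1..n-1} \<subseteq> {1..n}" by auto
  have s2: "S \<subseteq> {1..n}" using True s1 by (rule order_trans)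
  have "insert n S \<subseteq> {1..n}" using s2 assms by simp
  moreover have "sum l (insert n S) = l n + sum l S" using fin nS by simp
  moreover have "{1..n} - insert n S = {1..n-1} - S" using assms by auto
  ultimately show ?thesis using True unfolding subgee_def short_set_def by simp
qed (auto simp: subgee_def)

lemma subgee_sub: "subgee n l S \<Longrightarrow> S \<subseteq> {1..n-1}"
  by (simp add: subgee_def)

lemma subgee_finite: "subgee n l S \<Longrightarrow> finite S"
  by (rule finite_subset[OF subgee_sub]) simp_all

lemma subgee_down:
  assumes gen: "generic_length_vector n l" and n1: "1 \<le> n"
    and S: "subgee n l S" and TS: "T \<subseteq> S"
  shows "subgee n l T"
proof -
  have Ssub: "S \<subseteq> {1..n-1}" and ineq: "l n + sum l S < sum l ({1..n-1} - S)"
    using S subgee_iff[OF n1] by auto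
  have Tsub: "T \<subseteq> {1..n-1}" using Ssub TS by (rule order_trans[rotated])
  have nn: "\<And>i. i \<in> {1..n-1} \<Longrightarrow> 0 \<le> l i"
  proof -
    fix i assume "i \<in> {1..n-1}"
    then have "i \<in> {1..n}" by (metis atLeastAtMost_iff diff_le_self order_trans)
    then show "0 \<le> l i" using gen_pos[OF gen] less_imp_le by blast
  qed
  have fS: "finite S" by (rule finite_subset[OF Ssub]) simp
  have "sum l T \<le> sum l S"
  proof (rule sum_mono2[OF fS TS])
    fix b assume "b \<in> S - T"
    then have "b \<in> {1..n-1}" using Ssub by blast
    then show "0 \<le> l b" by (rule nn)
  qed
  moreover have "sum l ({1..n-1} - S) \<le> sum l ({1..n-1} - T)"
  proof (rule sum_mono2)
    show "finite ({1..n-1} - T)" by simp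
    show "{1..n-1} - S \<subseteq> {1..n-1} - T" using TS by blast
    fix b assume "b \<in> {1..n-1} - T - ({1..n-1} - S)"
    then have "b \<in> {1..n-1}" by blast
    then show "0 \<le> l b" by (rule nn)
  qed
  ultimately have "l n + sum l T < sum l ({1..n-1} - T)" using ineq by linarith
  then show ?thesis using Tsub subgee_iff[OF n1] by blast
qed

lemma subgee_empty:
  assumes gen: "generic_length_vector n l" and n1: "1 \<le> n"
  shows "subgee n l {}"
proof -
  have "l n < sum l {1..n-1}" using gen unfolding generic_length_vector_def by (elim conjE)
  then show ?thesis unfolding subgee_iff[OF n1] by simp
qed

lemma two_subgees_miss:
  assumes gen: "generic_length_vector n l" and n1: "1 \<le> n"
    and S: "subgee n l S" and T: "subgee n l T"
  shows "2 \<le> card ({1..n-1} - (S \<union> T))"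
proof (rule ccontr)
  let ?C = "{1..n-1} - (S \<union> T)"
  assume "\<not> 2 \<le> card ?C"
  then have cC: "card ?C \<le> 1" by simp
  have Ssub: "S \<subseteq> {1..n-1}" and iS: "l n + sum l S < sum l ({1..n-1} - S)"
    using S subgee_iff[OF n1] by auto
  have Tsub: "T \<subseteq> {1..n-1}" and iT: "l n + sum l T < sum l ({1..n-1} - T)"
    using T subgee_iff[OF n1] by auto
  have nn: "\<And>i. i \<in> {1..n-1} \<Longrightarrow> 0 \<le> l i"
  proof -
    fix i assume "i \<in> {1..n-1}"
    then have "i \<in> {1..n}" by (metis atLeastAtMost_iff diff_le_self order_trans)
    then show "0 \<le> l i" using gen_pos[OF gen] less_imp_le by blast
  qed
  have fS: "finite S" "finite T" by (rule finite_subset[OF Ssub], simp, rule finite_subset[OF Tsub], simp)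
  have e1: "sum l ({1..n-1} - S) = sum l (T - S) + sum l ?C"
  proof -
    have "{1..n-1} - S = (T - S) \<union> ?C" using Tsub by blast
    moreover have "(T - S) \<inter> ?C = {}" by blast
    ultimately show ?thesis using fS by (simp add: sum.union_disjoint)
  qed
  have e2: "sum l ({1..n-1} - T) = sum l (S - T) + sum l ?C"
  proof -
    have "{1..n-1} - T = (S - T) \<union> ?C" using Ssub by blast
    moreover have "(S - T) \<inter> ?C = {}" by blast
    ultimately show ?thesis using fS by (simp add: sum.union_disjoint)
  qed
  have m1: "sum l (S - T) \<le> sum l S"
  proof (rule sum_mono2[OF fS(1)])
    show "S - T \<subseteq> S" by blast
    fix b assume "b \<in> S - (S - T)"
    then have "b \<in> {1..n-1}" using Ssub by blast
    then show "0 \<le> l b" by (rule nn)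
  qed
  have m2: "sum l (T - S) \<le> sum l T"
  proof (rule sum_mono2[OF fS(2)])
    show "T - S \<subseteq> T" by blast
    fix b assume "b \<in> T - (T - S)"
    then have "b \<in> {1..n-1}" using Tsub by blast
    then show "0 \<le> l b" by (rule nn)
  qed
  have key: "l n < sum l ?C" using iS iT e1 e2 m1 m2 by linarith
  have fC: "finite ?C" by simp
  show False
  proof (cases "?C = {}")
    case True
    have "sum l ?C = 0" by (simp only: True sum.empty)
    then show ?thesis using key gen_pos[OF gen, of n] n1 by simp
  next
    case False
    then obtain x where xC: "x \<in> ?C" by blast
    have all: "\<forall>a\<in>?C. \<forall>b\<in>?C. a = b" using card_le_Suc0_iff_eq[OF fC] cC by simp
    have x: "?C = {x}"
    proof
      show "?C \<subseteq> {x}" using all xC by blast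
      show "{x} \<subseteq> ?C" using xC by blast
    qed
    have "x \<in> {1..n-1}" using xC by (rule DiffD1)
    then have "1 \<le> x" "x \<le> n" by (metis atLeastAtMost_iff diff_le_self order_trans)+
    then have "l x \<le> l n" using gen_mono[OF gen] by blast
    moreover have "sum l ?C = l x" by (simp only: x sum.insert_remove sum.empty) simp
    ultimately show ?thesis using key by linarith
  qed
qed

lemma subgee_card:
  assumes gen: "generic_length_vector n l" and n1: "1 \<le> n" and S: "subgee n l S"
  shows "card S \<le> n - 3"
proof -
  have "2 \<le> card ({1..n-1} - S)" using two_subgees_miss[OF gen n1 S S] by simp
  moreover have "card ({1..n-1} - S) = (n - 1) - card S"
    using subgee_sub[OF S] by (simp add: card_Diff_subset finite_subset)
  ultimately show ?thesis by simp
qed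




definition fcnt :: "nat \<Rightarrow> (nat \<Rightarrow> real) \<Rightarrow> nat set \<Rightarrow> nat" where
  "fcnt n l S = card {U. subgee n l U \<and> S \<subseteq> U}"

lemma finite_subgees: "finite {U. subgee n l U}"
proof (rule finite_subset[of _ "Pow {1..n-1}"])
  show "{U. subgee n l U} \<subseteq> Pow {1..n-1}" using subgee_sub by blast
qed simp

lemma finite_subgees_P: "finite {U. subgee n l U \<and> P U}"
  by (rule finite_subset[OF _ finite_subgees[of n l]]) blast

lemma card_filter_sum:
  assumes "finite A"
  shows "card {x\<in>A. P x} = (\<Sum>x\<in>A. if P x then 1 else (0::nat))"
proof -
  have "card {x\<in>A. P x} = (\<Sum>x\<in>{x\<in>A. P x}. (1::nat))" by simp
  also have "\<dots> = (\<Sum>x\<in>A. if P x then 1 else 0)"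
    by (rule sum.inter_filter[OF assms])
  finally show ?thesis .
qed

lemma sum_count_swap:
  assumes fK: "finite Kf" and fY: "finite Y"
    and bnd: "\<And>U. U \<in> Kf \<Longrightarrow> card (Y \<inter> U) \<le> k"
  shows "(\<Sum>T\<in>{T. T \<subseteq> Y \<and> card T \<le> k}. card {U\<in>Kf. T \<subseteq> U}) = (\<Sum>U\<in>Kf. (2::nat) ^ card (Y \<inter> U))"
proof -
  let ?TT = "{T. T \<subseteq> Y \<and> card T \<le> k}"
  have fT: "finite ?TT" using fY by simp
  have "(\<Sum>T\<in>?TT. card {U\<in>Kf. T \<subseteq> U}) = (\<Sum>T\<in>?TT. \<Sum>U\<in>Kf. if T \<subseteq> U then 1 else 0)"
    using card_filter_sum[OF fK] by simp
  also have "\<dots> = (\<Sum>U\<in>Kf. \<Sum>T\<in>?TT. if T \<subseteq> U then 1 else 0)"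
    by (rule sum.swap)
  also have "\<dots> = (\<Sum>U\<in>Kf. 2 ^ card (Y \<inter> U))"
  proof (rule sum.cong[OF refl])
    fix U assume U: "U \<in> Kf"
    have fYU: "finite (Y \<inter> U)" using fY by simp
    have "(\<Sum>T\<in>?TT. if T \<subseteq> U then 1 else (0::nat)) = card {T\<in>?TT. T \<subseteq> U}"
      using card_filter_sum[OF fT] by simp
    also have "{T\<in>?TT. T \<subseteq> U} = Pow (Y \<inter> U)"
    proof (rule set_eqI, rule iffI)
      fix T assume "T \<in> Pow (Y \<inter> U)"
      then have TS: "T \<subseteq> Y \<inter> U" by simp
      then have "card T \<le> card (Y \<inter> U)" using fYU by (rule card_mono[rotated])
      then have "card T \<le> k" using bnd[OF U] by linarith
      then show "T \<in> {T\<in>?TT. T \<subseteq> U}" using TS by blast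
    qed blast
    also have "card (Pow (Y \<inter> U)) = 2 ^ card (Y \<inter> U)" using fYU by (rule card_Pow)
    finally show "(\<Sum>T\<in>?TT. if T \<subseteq> U then 1 else (0::nat)) = 2 ^ card (Y \<inter> U)" .
  qed
  finally show ?thesis .
qed

lemma even_sum_pow2:
  assumes "finite Kf"
  shows "even (\<Sum>U\<in>Kf. (2::nat) ^ c U) \<longleftrightarrow> even (card {U\<in>Kf. c U = 0})"
proof -
  have "even (card {U\<in>Kf. odd ((2::nat) ^ c U)}) \<longleftrightarrow> even (\<Sum>U\<in>Kf. (2::nat) ^ c U)"
    by (rule parity_count[OF assms])
  moreover have "{U\<in>Kf. odd ((2::nat) ^ c U)} = {U\<in>Kf. c U = 0}" by auto
  ultimately show ?thesis by simp
qed

lemma fsum_parity: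
  assumes gen: "generic_length_vector n l" and n1: "1 \<le> n" and fY: "finite Y"
    and bnd: "\<And>U. subgee n l U \<Longrightarrow> card (Y \<inter> U) \<le> k"
  shows "even (\<Sum>T\<in>{T. T \<subseteq> Y \<and> card T \<le> k}. fcnt n l T) \<longleftrightarrow>
         even (card {U. subgee n l U \<and> Y \<inter> U = {}})"
proof -
  let ?K = "{U. subgee n l U}"
  have fK: "finite ?K" by (rule finite_subgees)
  have "(\<Sum>T\<in>{T. T \<subseteq> Y \<and> card T \<le> k}. fcnt n l T) =
        (\<Sum>T\<in>{T. T \<subseteq> Y \<and> card T \<le> k}. card {U\<in>?K. T \<subseteq> U})"
    unfolding fcnt_def by simp
  also have "\<dots> = (\<Sum>U\<in>?K. 2 ^ card (Y \<inter> U))"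
    by (rule sum_count_swap[OF fK fY]) (use bnd in simp)
  finally have e: "(\<Sum>T\<in>{T. T \<subseteq> Y \<and> card T \<le> k}. fcnt n l T) = (\<Sum>U\<in>?K. (2::nat) ^ card (Y \<inter> U))" .
  have "even (\<Sum>U\<in>?K. (2::nat) ^ card (Y \<inter> U)) \<longleftrightarrow> even (card {U\<in>?K. card (Y \<inter> U) = 0})"
    by (rule even_sum_pow2[OF fK])
  moreover have "{U\<in>?K. card (Y \<inter> U) = 0} = {U. subgee n l U \<and> Y \<inter> U = {}}"
    using fY by auto
  ultimately show ?thesis using e by simp
qed

lemma fcnt_pos_subgee:
  assumes gen: "generic_length_vector n l" and n1: "1 \<le> n" and "0 < fcnt n l S"
  shows "subgee n l S"
proof -
  have "{U. subgee n l U \<and> S \<subseteq> U} \<noteq> {}" using assms(3) unfolding fcnt_def by (metis card.empty less_irrefl)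
  then obtain U where "subgee n l U" "S \<subseteq> U" by blast
  then show ?thesis using subgee_down[OF gen n1] by blast
qed

lemma odd_fcnt_subgee:
  assumes gen: "generic_length_vector n l" and n1: "1 \<le> n" and "odd (fcnt n l S)"
  shows "subgee n l S"
  using fcnt_pos_subgee[OF gen n1] assms(3) by (metis gr0I even_zero)

lemma card_subgees_sub:
  assumes gen: "generic_length_vector n l" and n1: "1 \<le> n" and S: "subgee n l S"
  shows "card {U. subgee n l U \<and> U \<subseteq> S} = 2 ^ card S"
proof -
  have "{U. subgee n l U \<and> U \<subseteq> S} = Pow S" using subgee_down[OF gen n1 S] by blast
  then show ?thesis using subgee_finite[OF S] by (simp add: card_Pow)
qed



section \<open>Functionals killing the relations\<close>

definition Fdeg :: "nat \<Rightarrow> (nat \<Rightarrow> real) \<Rightarrow> nat \<Rightarrow> (nat \<times> nat set) set" where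
  "Fdeg n l e = {(e, S) | S. odd (fcnt n l S)}"

lemma mem_Fdeg: "(a, S) \<in> Fdeg n l e \<longleftrightarrow> a = e \<and> odd (fcnt n l S)"
  unfolding Fdeg_def by blast

lemma fsub_even:
  assumes gen: "generic_length_vector n l" and n1: "1 \<le> n"
    and S: "subgee n l S" and Sne: "S \<noteq> {}"
    and bnd: "\<And>U. subgee n l U \<Longrightarrow> card (({1..n-1} - S) \<inter> U) \<le> d"
  shows "even (card {T. T \<subseteq> {1..n-1} - S \<and> card T \<le> d \<and> odd (fcnt n l T)})"
proof -
  let ?Y = "{1..n-1} - S"
  let ?A = "{T. T \<subseteq> ?Y \<and> card T \<le> d}"
  have fA: "finite ?A" by simp
  have "{T. T \<subseteq> ?Y \<and> card T \<le> d \<and> odd (fcnt n l T)} = {T\<in>?A. odd (fcnt n l T)}" by blast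
  moreover have "even (card {T\<in>?A. odd (fcnt n l T)}) \<longleftrightarrow> even (\<Sum>T\<in>?A. fcnt n l T)"
    by (rule parity_count[OF fA])
  moreover have "even (\<Sum>T\<in>?A. fcnt n l T) \<longleftrightarrow> even (card {U. subgee n l U \<and> ?Y \<inter> U = {}})"
    by (rule fsum_parity[OF gen n1]) (use bnd in auto)
  moreover have "{U. subgee n l U \<and> ?Y \<inter> U = {}} = {U. subgee n l U \<and> U \<subseteq> S}"
    using subgee_sub by blast
  moreover have "card {U. subgee n l U \<and> U \<subseteq> S} = 2 ^ card S"
    by (rule card_subgees_sub[OF gen n1 S])
  moreover have "card S \<noteq> 0" using Sne subgee_finite[OF S] by simp
  ultimately show ?thesis by simp
qed

lemma bigrel_even:
  assumes gen: "generic_length_vector n l" and n4: "4 \<le> n"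
    and S: "subgee n l S" and hyp: "n \<le> card S + d + 2"
    and e: "e = n - 3 \<or> e = n - 4"
  shows "even (card ({(d, T) | T. (d, T) \<in> HK_basis n \<and> T \<inter> S = {}} \<inter> Fdeg n l e))"
proof (cases "d = e")
  case False
  then have "{(d, T) | T. (d, T) \<in> HK_basis n \<and> T \<inter> S = {}} \<inter> Fdeg n l e = {}"
    unfolding Fdeg_def by blast
  then show ?thesis by simp
next
  case True
  have n1: "1 \<le> n" using n4 by simp
  have eq: "{(d, T) | T. (d, T) \<in> HK_basis n \<and> T \<inter> S = {}} \<inter> Fdeg n l e
      = Pair d ` {T. T \<subseteq> {1..n-1} - S \<and> card T \<le> d \<and> odd (fcnt n l T)}"
    using True unfolding Fdeg_def HK_basis_def by blast
  have Sne: "S \<noteq> {}"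
  proof
    assume "S = {}"
    then have "n \<le> d + 2" using hyp by simp
    then show False using e True n4 by linarith
  qed
  have bnd: "card (({1..n-1} - S) \<inter> U) \<le> d" if U: "subgee n l U" for U
  proof -
    have cU: "card U \<le> n - 3" by (rule subgee_card[OF gen n1 U])
    have fU: "finite U" by (rule subgee_finite[OF U])
    have c1: "card (({1..n-1} - S) \<inter> U) \<le> card U" by (rule card_mono[OF fU]) blast
    show ?thesis
    proof (cases "e = n - 3")
      case True
      then show ?thesis using c1 cU \<open>d = e\<close> by linarith
    next
      case False
      then have de: "d = n - 4" using e \<open>d = e\<close> by simp
      show ?thesis
      proof (rule ccontr)
        assume "\<not> ?thesis"
        then have big: "card (({1..n-1} - S) \<inter> U) \<ge> n - 3" using de n4 by linarith
        then have "card (({1..n-1} - S) \<inter> U) = card U" using c1 cU by linarith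
        then have "({1..n-1} - S) \<inter> U = U"
          using fU by (metis card_subset_eq inf_le2)
        then have disj: "S \<inter> U = {}" by blast
        have cS: "2 \<le> card S" using hyp de n4 by linarith
        have fS: "finite S" by (rule subgee_finite[OF S])
        have cSU: "card (S \<union> U) = card S + card U" using disj fS fU by (simp add: card_Un_disjoint)
        have cU3: "card U = n - 3" using big c1 cU by linarith
        have sub: "S \<union> U \<subseteq> {1..n-1}" using subgee_sub[OF S] subgee_sub[OF U] by blast
        have "card ({1..n-1} - (S \<union> U)) = card {1..n-1} - card (S \<union> U)"
          using sub by (meson card_Diff_subset finite_subset finite_atLeastAtMost)
        also have "\<dots> = 0" using cSU cS cU3 n4 by simp
        finally have "card ({1..n-1} - (S \<union> U)) = 0" .
        moreover have "2 \<le> card ({1..n-1} - (S \<union> U))" by (rule two_subgees_miss[OF gen n1 S U])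
        ultimately show False by linarith
      qed
    qed
  qed
  have "even (card {T. T \<subseteq> {1..n-1} - S \<and> card T \<le> d \<and> odd (fcnt n l T)})"
    by (rule fsub_even[OF gen n1 S Sne bnd])
  moreover have "card (Pair d ` {T. T \<subseteq> {1..n-1} - S \<and> card T \<le> d \<and> odd (fcnt n l T)})
      = card {T. T \<subseteq> {1..n-1} - S \<and> card T \<le> d \<and> odd (fcnt n l T)}"
    by (rule card_image) (simp add: inj_on_def)
  ultimately show ?thesis using eq by simp
qed

lemma rel_even:
  assumes gen: "generic_length_vector n l" and n4: "4 \<le> n"
    and r: "r \<in> HK_relations n l" and e: "e = n - 3 \<or> e = n - 4"
  shows "finite r \<and> even (card (r \<inter> Fdeg n l e))"
proof -
  have n1: "1 \<le> n" using n4 by simp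
  from r consider (single) d S where "r = {(d, S)}" "(d, S) \<in> HK_basis n" "\<not> subgee n l S"
    | (big) d S where "r = {(d, T) | T. (d, T) \<in> HK_basis n \<and> T \<inter> S = {}}" "subgee n l S" "n \<le> card S + d + 2"
    unfolding HK_relations_def by blast
  then show ?thesis
  proof cases
    case single
    have "r \<inter> Fdeg n l e = {}"
      using single odd_fcnt_subgee[OF gen n1] unfolding Fdeg_def by blast
    then show ?thesis using single by simp
  next
    case big
    have "r \<subseteq> Pair d ` Pow {1..n-1}" using big unfolding HK_basis_def by blast
    then have "finite r" by (rule finite_subset) simp
    then show ?thesis using bigrel_even[OF gen n4 big(2) big(3) e] big(1) by simp
  qed
qed

definition TPhi :: "nat \<Rightarrow> (nat \<Rightarrow> real) \<Rightarrow> ((nat \<times> nat set) \<times> (nat \<times> nat set)) set" where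
  "TPhi n l = Fdeg n l (n - 3) \<times> Fdeg n l (n - 4)"

lemma tensor_rel_even:
  assumes gen: "generic_length_vector n l" and n4: "4 \<le> n"
    and g: "g \<in> tensor_relations n l"
  shows "finite g \<and> even (card (g \<inter> TPhi n l))"
proof -
  from g consider (L) r b where "g = r \<times> {b}" "r \<in> HK_relations n l"
    | (R) r b where "g = {b} \<times> r" "r \<in> HK_relations n l"
    unfolding tensor_relations_def by blast
  then show ?thesis
  proof cases
    case L
    have r1: "finite r" "even (card (r \<inter> Fdeg n l (n - 3)))" using rel_even[OF gen n4 L(2)] by auto
    have "g \<inter> TPhi n l = (r \<inter> Fdeg n l (n - 3)) \<times> ({b} \<inter> Fdeg n l (n - 4))"
      unfolding L(1) TPhi_def by blast
    then have "card (g \<inter> TPhi n l) = card (r \<inter> Fdeg n l (n - 3)) * card ({b} \<inter> Fdeg n l (n - 4))"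
      by (simp add: card_cartesian_product)
    then show ?thesis using r1 L(1) by simp
  next
    case R
    have r1: "finite r" "even (card (r \<inter> Fdeg n l (n - 4)))" using rel_even[OF gen n4 R(2)] by auto
    have "g \<inter> TPhi n l = ({b} \<inter> Fdeg n l (n - 3)) \<times> (r \<inter> Fdeg n l (n - 4))"
      unfolding R(1) TPhi_def by blast
    then have "card (g \<inter> TPhi n l) = card ({b} \<inter> Fdeg n l (n - 3)) * card (r \<inter> Fdeg n l (n - 4))"
      by (simp add: card_cartesian_product)
    then show ?thesis using r1 R(1) by simp
  qed
qed

lemma tensor_zero_even:
  assumes gen: "generic_length_vector n l" and n4: "4 \<le> n"
    and z: "tensor_zero n l x"
  shows "even (card (x \<inter> TPhi n l))"
  using zspan_functional[of "tensor_relations n l" "TPhi n l" x] tensor_rel_even[OF gen n4] z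
  unfolding tensor_zero_def by blast



section \<open>Odd number of subgees\<close>

lemma zspan_gen: "g \<in> G \<Longrightarrow> g \<in> zspan G"
proof -
  assume "g \<in> G"
  then have "(g - {}) \<union> ({} - g) \<in> zspan G" by (rule zspan.zspan_add[OF _ zspan.zspan_zero])
  then show ?thesis by simp
qed

lemma odd_c_iff:
  assumes gen: "generic_length_vector n l" and n4: "4 \<le> n"
    and evK: "even (card {U. subgee n l U})"
    and T: "subgee n l T"
  shows "odd (card {S. (subgee n l S \<and> S \<noteq> {} \<and> odd (fcnt n l S)) \<and> T \<inter> S = {}}) \<longleftrightarrow> T = {}"
proof -
  have n1: "1 \<le> n" using n4 by simp
  let ?Y = "{1..n-1} - T"
  let ?A = "{S. S \<subseteq> ?Y \<and> card S \<le> n - 3}"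
  let ?A' = "{S. S \<subseteq> ?Y \<and> card S \<le> n - 3 \<and> S \<noteq> {}}"
  have fA': "finite ?A'" by simp
  have e1: "{S. (subgee n l S \<and> S \<noteq> {} \<and> odd (fcnt n l S)) \<and> T \<inter> S = {}} = {S\<in>?A'. odd (fcnt n l S)}"
  proof (rule set_eqI, rule iffI)
    fix S assume "S \<in> {S. (subgee n l S \<and> S \<noteq> {} \<and> odd (fcnt n l S)) \<and> T \<inter> S = {}}"
    then have S: "subgee n l S" "S \<noteq> {}" "odd (fcnt n l S)" "T \<inter> S = {}" by auto
    have "S \<subseteq> ?Y" using subgee_sub[OF S(1)] S(4) by blast
    moreover have "card S \<le> n - 3" by (rule subgee_card[OF gen n1 S(1)])
    ultimately show "S \<in> {S\<in>?A'. odd (fcnt n l S)}" using S by blast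
  next
    fix S assume "S \<in> {S\<in>?A'. odd (fcnt n l S)}"
    then have S: "S \<subseteq> ?Y" "S \<noteq> {}" "odd (fcnt n l S)" by auto
    have "subgee n l S" by (rule odd_fcnt_subgee[OF gen n1 S(3)])
    then show "S \<in> {S. (subgee n l S \<and> S \<noteq> {} \<and> odd (fcnt n l S)) \<and> T \<inter> S = {}}" using S by blast
  qed
  have p1: "even (card {S\<in>?A'. odd (fcnt n l S)}) \<longleftrightarrow> even (\<Sum>S\<in>?A'. fcnt n l S)"
    by (rule parity_count[OF fA'])
  have Aeq: "?A = insert {} ?A'" by auto
  have "{} \<notin> ?A'" by simp
  then have s: "(\<Sum>S\<in>?A. fcnt n l S) = fcnt n l {} + (\<Sum>S\<in>?A'. fcnt n l S)"
    using Aeq fA' by simp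
  have f0: "fcnt n l {} = card {U. subgee n l U}" unfolding fcnt_def by simp
  have p2: "even (\<Sum>S\<in>?A. fcnt n l S) \<longleftrightarrow> even (card {U. subgee n l U \<and> ?Y \<inter> U = {}})"
  proof (rule fsum_parity[OF gen n1])
    fix U assume U: "subgee n l U"
    have "card (?Y \<inter> U) \<le> card U" by (rule card_mono[OF subgee_finite[OF U]]) blast
    then show "card (?Y \<inter> U) \<le> n - 3" using subgee_card[OF gen n1 U] by linarith
  qed simp
  have "{U. subgee n l U \<and> ?Y \<inter> U = {}} = {U. subgee n l U \<and> U \<subseteq> T}"
    using subgee_sub by blast
  then have c2: "card {U. subgee n l U \<and> ?Y \<inter> U = {}} = 2 ^ card T"
    using card_subgees_sub[OF gen n1 T] by simp
  have "even (2 ^ card T :: nat) \<longleftrightarrow> T \<noteq> {}" using subgee_finite[OF T] by (simp add: card_gt_0_iff)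
  then show ?thesis using e1 p1 p2 s f0 evK c2 by simp
qed

lemma odd_subgees:
  assumes gen: "generic_length_vector n l" and n4: "4 \<le> n"
    and Rm: "\<not> HK_zero n l {(n - 3, {})}"
  shows "odd (card {U. subgee n l U})"
proof (rule ccontr)
  assume "\<not> odd (card {U. subgee n l U})"
  then have evK: "even (card {U. subgee n l U})" by simp
  have n1: "1 \<le> n" using n4 by simp
  define m where "m = n - 3"
  define SS where "SS = {S. subgee n l S \<and> S \<noteq> {} \<and> odd (fcnt n l S)}"
  define rel where "rel S = {(m, T) | T. (m, T) \<in> HK_basis n \<and> T \<inter> S = {}}" for S
  define c where "c T = card {S\<in>SS. T \<inter> S = {}}" for T
  define TT where "TT = {T. T \<subseteq> {1..n-1} \<and> card T \<le> m \<and> \<not> subgee n l T \<and> odd (c T)}"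
  let ?G = "HK_relations n l"
  have fSS: "finite SS" unfolding SS_def by (rule finite_subgees_P)
  have fTT: "finite TT" unfolding TT_def by (rule finite_subset[of _ "Pow {1..n-1}"]) auto
  have X1: "xsumi rel SS \<in> zspan ?G"
  proof (rule xsumi_zspan[OF fSS])
    fix S assume "S \<in> SS"
    then have S: "subgee n l S" "S \<noteq> {}" unfolding SS_def by auto
    have "card S \<noteq> 0" using S subgee_finite by auto
    then have "n \<le> card S + m + 2" unfolding m_def using n4 by linarith
    then have "rel S \<in> ?G" unfolding rel_def HK_relations_def using S(1) by blast
    then show "rel S \<in> zspan ?G" by (rule zspan_gen)
  qed
  have X2: "xsumi (\<lambda>T. {(m, T)}) TT \<in> zspan ?G"
  proof (rule xsumi_zspan[OF fTT])
    fix T assume "T \<in> TT"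
    then have "(m, T) \<in> HK_basis n" "\<not> subgee n l T" unfolding TT_def HK_basis_def by auto
    then have "{(m, T)} \<in> ?G" unfolding HK_relations_def by blast
    then show "{(m, T)} \<in> zspan ?G" by (rule zspan_gen)
  qed
  have cT: "odd (c T) \<longleftrightarrow> T = {}" if "subgee n l T" for T
    using odd_c_iff[OF gen n4 evK that] unfolding c_def SS_def by simp
  have mem1: "p \<in> xsumi rel SS \<longleftrightarrow> (\<exists>T. p = (m, T) \<and> T \<subseteq> {1..n-1} \<and> card T \<le> m \<and> odd (c T))" for p
  proof (cases "\<exists>T. p = (m, T) \<and> T \<subseteq> {1..n-1} \<and> card T \<le> m")
    case True
    then obtain T where T: "p = (m, T)" "T \<subseteq> {1..n-1}" "card T \<le> m" by blast
    have "{S\<in>SS. p \<in> rel S} = {S\<in>SS. T \<inter> S = {}}" using T unfolding rel_def HK_basis_def by blast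
    then show ?thesis using T unfolding xsumi_def c_def by auto
  next
    case False
    then have e: "{S\<in>SS. p \<in> rel S} = {}" unfolding rel_def HK_basis_def by blast
    have "p \<notin> xsumi rel SS" unfolding xsumi_def mem_Collect_eq e by simp
    then show ?thesis using False by blast
  qed
  have mem2: "p \<in> xsumi (\<lambda>T. {(m, T)}) TT \<longleftrightarrow> (\<exists>T. p = (m, T) \<and> T \<in> TT)" for p
  proof (cases "\<exists>T. p = (m, T) \<and> T \<in> TT")
    case True
    then obtain T where T: "p = (m, T)" "T \<in> TT" by blast
    have "{T'\<in>TT. p \<in> {(m, T')}} = {T}" using T by blast
    then show ?thesis using True unfolding xsumi_def by simp
  next
    case False
    then have e: "{T'\<in>TT. p \<in> {(m, T')}} = {}" by blast
    have "p \<notin> xsumi (\<lambda>T. {(m, T)}) TT" unfolding xsumi_def mem_Collect_eq e by simp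
    then show ?thesis using False by blast
  qed
  have eq: "(xsumi rel SS - xsumi (\<lambda>T. {(m, T)}) TT) \<union> (xsumi (\<lambda>T. {(m, T)}) TT - xsumi rel SS) = {(m, {})}"
  proof (rule set_eqI)
    fix p
    show "p \<in> (xsumi rel SS - xsumi (\<lambda>T. {(m, T)}) TT) \<union> (xsumi (\<lambda>T. {(m, T)}) TT - xsumi rel SS) \<longleftrightarrow> p \<in> {(m, {})}"
    proof (cases "\<exists>T. p = (m, T) \<and> T \<subseteq> {1..n-1} \<and> card T \<le> m")
      case True
      then obtain T where T: "p = (m, T)" "T \<subseteq> {1..n-1}" "card T \<le> m" by blast
      have m2T: "p \<in> xsumi (\<lambda>T. {(m, T)}) TT \<longleftrightarrow> T \<in> TT" using mem2[of p] unfolding T(1) by simp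
      have m1T: "p \<in> xsumi rel SS \<longleftrightarrow> odd (c T)" using mem1[of p] T(2,3) unfolding T(1) by simp
      show ?thesis
      proof (cases "subgee n l T")
        case True
        have "T \<notin> TT" using True unfolding TT_def by blast
        then show ?thesis using m1T m2T cT[OF True] T(1) by blast
      next
        case False
        have "T \<in> TT \<longleftrightarrow> odd (c T)" using False T(2,3) unfolding TT_def by blast
        moreover have "T \<noteq> {}" using False subgee_empty[OF gen n1] by blast
        ultimately show ?thesis using m1T m2T T(1) by blast
      qed
    next
      case False
      have n1': "p \<notin> xsumi rel SS" using mem1[of p] False by blast
      have n2': "p \<notin> xsumi (\<lambda>T. {(m, T)}) TT"
      proof
        assume "p \<in> xsumi (\<lambda>T. {(m, T)}) TT"
        then obtain T where pT: "p = (m, T)" and TT: "T \<in> TT" using mem2[of p] by blast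
        from TT have "T \<subseteq> {1..n-1} \<and> card T \<le> m" unfolding TT_def by simp
        then have "\<exists>T. p = (m, T) \<and> T \<subseteq> {1..n-1} \<and> card T \<le> m" using pT by (intro exI[of _ T]) simp
        with False show False by (rule notE)
      qed
      have "p \<noteq> (m, {})"
      proof
        assume "p = (m, {})"
        then have "\<exists>T. p = (m, T) \<and> T \<subseteq> {1..n-1} \<and> card T \<le> m" by (intro exI[of _ "{}"]) simp
        with False show False by (rule notE)
      qed
      then show ?thesis using n1' n2' by blast
    qed
  qed
  have "{(m, {})} \<in> zspan ?G" using zspan_symdiff[OF X1 X2] eq by simp
  then show False using Rm unfolding HK_zero_def m_def by simp
qed



lemma barprod_parity:
  "even (card (barprod w \<inter> F)) \<longleftrightarrow> even (card {J. J \<subseteq> {..<length w} \<and> split_mon w J \<in> F})"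
proof -
  let ?D = "Pow {..<length w}"
  have fD: "finite ?D" by simp
  have "barprod w = {x. odd (card {J\<in>?D. split_mon w J = x})}"
    unfolding barprod_def by simp
  moreover have "{J. J \<subseteq> {..<length w} \<and> split_mon w J \<in> F} = {J\<in>?D. split_mon w J \<in> F}" by simp
  ultimately show ?thesis using parity_image_count[OF fD, of "split_mon w" F] by simp
qed

lemma odd_fcnt_empty:
  assumes gen: "generic_length_vector n l" and n4: "4 \<le> n"
    and Rm: "\<not> HK_zero n l {(n - 3, {})}"
  shows "odd (fcnt n l {})"
  using odd_subgees[OF gen n4 Rm] unfolding fcnt_def by simp

lemma split_mon_TPhi:
  assumes "length w = 2 * (n - 3) - 1" and "4 \<le> n" and "J \<subseteq> {..<length w}"
  shows "split_mon w J \<in> TPhi n l \<longleftrightarrow>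
    card J = n - 3 \<and> odd (fcnt n l (vidx w J)) \<and> odd (fcnt n l (vidx w ({..<length w} - J)))"
  using assms unfolding split_mon_def TPhi_def Fdeg_def by auto

theorem part1:
  assumes gen: "generic_length_vector n l" and n4: "4 \<le> n"
    and Rm: "\<not> HK_zero n l {(n - 3, {})}"
    and pw: "n - 3 = 2 ^ k"
  shows "\<not> tensor_zero n l (barprod (replicate (2 * (n - 3) - 1) None))"
proof
  let ?w = "replicate (2 * (n - 3) - 1) None :: nat option list"
  assume tz: "tensor_zero n l (barprod ?w)"
  have ev: "even (card (barprod ?w \<inter> TPhi n l))" by (rule tensor_zero_even[OF gen n4 tz])
  have f0: "odd (fcnt n l {})" by (rule odd_fcnt_empty[OF gen n4 Rm])
  have vid: "vidx ?w J = {}" for J unfolding vidx_def by auto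
  have "{J. J \<subseteq> {..<length ?w} \<and> split_mon ?w J \<in> TPhi n l} = {J. J \<subseteq> {..<length ?w} \<and> card J = n - 3}"
    using split_mon_TPhi[of ?w n _ l] n4 f0 vid by auto
  moreover have "card {J. J \<subseteq> {..<length ?w} \<and> card J = n - 3} = (2 * (n - 3) - 1) choose (n - 3)"
    by (simp add: n_subsets)
  moreover have "2 * (n - 3) - 1 = 2 ^ Suc k - 1" using pw by simp
  moreover have "odd ((2 ^ Suc k - 1) choose (2 ^ k))"
    by (rule odd_choose_pow2_minus1) simp
  ultimately have "odd (card {J. J \<subseteq> {..<length ?w} \<and> split_mon ?w J \<in> TPhi n l})"
    using pw by simp
  then show False using ev barprod_parity[of ?w "TPhi n l"] by simp
qed



section \<open>Minimal non-delta sets\<close>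

definition delta :: "nat \<Rightarrow> (nat \<Rightarrow> real) \<Rightarrow> nat set \<Rightarrow> bool" where
  "delta n l Q \<longleftrightarrow> (\<exists>Z0\<subseteq>Q. \<forall>S\<subseteq>Q. odd (fcnt n l S) \<longleftrightarrow> S \<subseteq> Z0)"

lemma fcnt_gee:
  assumes G: "gee n l G"
  shows "fcnt n l G = 1"
proof -
  have "{U. subgee n l U \<and> G \<subseteq> U} = {G}" using G unfolding gee_def by blast
  then show ?thesis unfolding fcnt_def by simp
qed

lemma nondelta_full:
  assumes gen: "generic_length_vector n l" and n4: "4 \<le> n"
    and Rm: "\<not> HK_zero n l {(n - 3, {})}"
    and G: "gee n l G" and Gne: "G \<noteq> {}"
  shows "\<not> delta n l {1..n-1}"
proof
  assume "delta n l {1..n-1}"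
  then obtain Z0 where Z0: "Z0 \<subseteq> {1..n-1}" and Zp: "\<And>S. S \<subseteq> {1..n-1} \<Longrightarrow> odd (fcnt n l S) \<longleftrightarrow> S \<subseteq> Z0"
    unfolding delta_def by blast
  have n1: "1 \<le> n" using n4 by simp
  have Gs: "subgee n l G" using G unfolding gee_def by blast
  have Gsub: "G \<subseteq> {1..n-1}" by (rule subgee_sub[OF Gs])
  have "odd (fcnt n l G)" using fcnt_gee[OF G] by simp
  then have GZ: "G \<subseteq> Z0" using Zp[OF Gsub] by simp
  have "odd (fcnt n l Z0)" using Zp[OF Z0] by simp
  then have "subgee n l Z0" by (rule odd_fcnt_subgee[OF gen n1])
  then have ZG: "Z0 = G" using G GZ unfolding gee_def by blast
  let ?Y = "{1..n-1} - G"
  let ?A = "{T. T \<subseteq> ?Y \<and> card T \<le> n - 3}"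
  have fA: "finite ?A" by simp
  have "{T\<in>?A. odd (fcnt n l T)} = {{}}"
  proof (rule set_eqI, rule iffI)
    fix T assume T: "T \<in> {T\<in>?A. odd (fcnt n l T)}"
    then have "T \<subseteq> {1..n-1}" by blast
    then have "T \<subseteq> G" using Zp T ZG by blast
    then show "T \<in> {{}}" using T by blast
  next
    fix T :: "nat set" assume "T \<in> {{}}"
    then have T: "T = {}" by simp
    have "odd (fcnt n l {})" using Zp[of "{}"] by simp
    then show "T \<in> {T\<in>?A. odd (fcnt n l T)}" using T by simp
  qed
  then have o1: "odd (card {T\<in>?A. odd (fcnt n l T)})" by simp
  have p1: "even (card {T\<in>?A. odd (fcnt n l T)}) \<longleftrightarrow> even (\<Sum>T\<in>?A. fcnt n l T)"
    by (rule parity_count[OF fA])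
  have p2: "even (\<Sum>T\<in>?A. fcnt n l T) \<longleftrightarrow> even (card {U. subgee n l U \<and> ?Y \<inter> U = {}})"
  proof (rule fsum_parity[OF gen n1])
    fix U assume U: "subgee n l U"
    have "card (?Y \<inter> U) \<le> card U" by (rule card_mono[OF subgee_finite[OF U]]) blast
    then show "card (?Y \<inter> U) \<le> n - 3" using subgee_card[OF gen n1 U] by linarith
  qed simp
  have "{U. subgee n l U \<and> ?Y \<inter> U = {}} = {U. subgee n l U \<and> U \<subseteq> G}"
    using subgee_sub by blast
  then have c2: "card {U. subgee n l U \<and> ?Y \<inter> U = {}} = 2 ^ card G"
    using card_subgees_sub[OF gen n1 Gs] by simp
  have "card G \<noteq> 0" using Gne subgee_finite[OF Gs] by simp
  then have "even (card {U. subgee n l U \<and> ?Y \<inter> U = {}})" using c2 by simp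
  then show False using o1 p1 p2 by simp
qed

lemma delta_empty:
  assumes "odd (fcnt n l {})"
  shows "delta n l {}"
  unfolding delta_def using assms by (intro exI[of _ "{}"]) simp

lemma delta_single:
  assumes "odd (fcnt n l {})"
  shows "delta n l {i}"
proof -
  let ?Z = "if odd (fcnt n l {i}) then {i} else {}"
  have "\<forall>S\<subseteq>{i}. odd (fcnt n l S) \<longleftrightarrow> S \<subseteq> ?Z"
  proof (intro allI impI)
    fix S assume "S \<subseteq> {i}"
    then have "S = {} \<or> S = {i}" by blast
    then show "odd (fcnt n l S) \<longleftrightarrow> S \<subseteq> ?Z" using assms by auto
  qed
  moreover have "?Z \<subseteq> {i}" by simp
  ultimately show ?thesis unfolding delta_def by blast
qed

definition goodQ :: "nat \<Rightarrow> (nat \<Rightarrow> real) \<Rightarrow> nat set \<Rightarrow> nat set \<Rightarrow> bool" where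
  "goodQ n l Q Z \<longleftrightarrow> (\<forall>S\<subseteq>Q. odd (fcnt n l S) \<longleftrightarrow> ((S = Q) \<noteq> (S \<subseteq> Z)))"

lemma minimal_nondelta_good:
  assumes odd0: "odd (fcnt n l {})"
    and Qsub: "Q \<subseteq> {1..n-1}" and nd: "\<not> delta n l Q"
    and minQ: "\<And>Q'. Q' \<subseteq> {1..n-1} \<Longrightarrow> card Q' < card Q \<Longrightarrow> delta n l Q'"
  shows "goodQ n l Q {i\<in>Q. odd (fcnt n l {i})} \<and> 2 \<le> card Q"
proof -
  let ?Z = "{i\<in>Q. odd (fcnt n l {i})}"
  have fQ: "finite Q" by (rule finite_subset[OF Qsub]) simp
  have proper: "odd (fcnt n l S) \<longleftrightarrow> S \<subseteq> ?Z" if SQ: "S \<subseteq> Q" and Sne: "S \<noteq> Q" for S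
  proof -
    obtain d where d: "d \<in> Q" "d \<notin> S" using SQ Sne by blast
    let ?Q' = "Q - {d}"
    have "card ?Q' < card Q" by (rule card_Diff1_less[OF fQ d(1)])
    moreover have "?Q' \<subseteq> {1..n-1}" using Qsub by blast
    ultimately have "delta n l ?Q'" using minQ by blast
    then obtain Z0 where Z0: "Z0 \<subseteq> ?Q'" and Zp: "\<And>S'. S' \<subseteq> ?Q' \<Longrightarrow> odd (fcnt n l S') \<longleftrightarrow> S' \<subseteq> Z0"
      unfolding delta_def by blast
    have single: "i \<in> Z0 \<longleftrightarrow> i \<in> ?Z" if "i \<in> ?Q'" for i
    proof -
      have "{i} \<subseteq> ?Q'" using that by blast
      then have "odd (fcnt n l {i}) \<longleftrightarrow> {i} \<subseteq> Z0" by (rule Zp)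
      then show ?thesis using that by auto
    qed
    have SQ': "S \<subseteq> ?Q'" using SQ d by blast
    have "S \<subseteq> Z0 \<longleftrightarrow> S \<subseteq> ?Z"
    proof
      assume "S \<subseteq> Z0"
      then show "S \<subseteq> ?Z" using single SQ' by blast
    next
      assume "S \<subseteq> ?Z"
      then show "S \<subseteq> Z0" using single SQ' by blast
    qed
    then show ?thesis using Zp[OF SQ'] by simp
  qed
  have full: "odd (fcnt n l Q) \<longleftrightarrow> \<not> Q \<subseteq> ?Z"
  proof (rule ccontr)
    assume "\<not> (odd (fcnt n l Q) \<longleftrightarrow> \<not> Q \<subseteq> ?Z)"
    then have fq: "odd (fcnt n l Q) \<longleftrightarrow> Q \<subseteq> ?Z" by blast
    have "\<forall>S\<subseteq>Q. odd (fcnt n l S) \<longleftrightarrow> S \<subseteq> ?Z"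
    proof (intro allI impI)
      fix S assume "S \<subseteq> Q"
      then show "odd (fcnt n l S) \<longleftrightarrow> S \<subseteq> ?Z" using proper fq by (cases "S = Q") auto
    qed
    moreover have "?Z \<subseteq> Q" by blast
    ultimately have "delta n l Q" unfolding delta_def by blast
    then show False using nd by simp
  qed
  have good: "goodQ n l Q ?Z"
    unfolding goodQ_def
  proof (intro allI impI)
    fix S assume "S \<subseteq> Q"
    then show "odd (fcnt n l S) \<longleftrightarrow> ((S = Q) \<noteq> (S \<subseteq> ?Z))"
      using proper full by (cases "S = Q") auto
  qed
  have "card Q \<noteq> 0"
  proof
    assume "card Q = 0"
    then have "Q = {}" using fQ by simp
    then show False using nd delta_empty[OF odd0] by simp
  qed
  moreover have "card Q \<noteq> 1"
  proof
    assume "card Q = 1"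
    then obtain i where "Q = {i}" by (rule card_1_singletonE)
    then show False using nd delta_single[OF odd0] by simp
  qed
  ultimately show ?thesis using good by simp
qed

lemma exists_good:
  assumes gen: "generic_length_vector n l" and n4: "4 \<le> n"
    and Rm: "\<not> HK_zero n l {(n - 3, {})}"
    and G: "gee n l G" and Gne: "G \<noteq> {}"
  shows "\<exists>Q Z. Q \<subseteq> {1..n-1} \<and> goodQ n l Q Z \<and> Z \<subseteq> Q \<and> 2 \<le> card Q \<and> card Q \<le> n - 3"
proof -
  have n1: "1 \<le> n" using n4 by simp
  have odd0: "odd (fcnt n l {})" by (rule odd_fcnt_empty[OF gen n4 Rm])
  let ?P = "\<lambda>c. \<exists>Q. Q \<subseteq> {1..n-1} \<and> \<not> delta n l Q \<and> card Q = c"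
  have "?P (card {1..n-1})" using nondelta_full[OF gen n4 Rm G Gne] by blast
  then obtain c where Pc: "?P c" and minc: "\<And>c'. c' < c \<Longrightarrow> \<not> ?P c'"
    using exists_least_iff[of ?P] by blast
  then obtain Q where Qsub: "Q \<subseteq> {1..n-1}" and nd: "\<not> delta n l Q" and cQ: "card Q = c" by blast
  have minQ: "delta n l Q'" if "Q' \<subseteq> {1..n-1}" "card Q' < card Q" for Q'
    using minc[of "card Q'"] that cQ by blast
  let ?Z = "{i\<in>Q. odd (fcnt n l {i})}"
  have gq: "goodQ n l Q ?Z" and c2: "2 \<le> card Q"
    using minimal_nondelta_good[OF odd0 Qsub nd minQ] by auto
  have fQ: "finite Q" by (rule finite_subset[OF Qsub]) simp
  have "card Q \<le> n - 3"
  proof (rule ccontr)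
    assume "\<not> card Q \<le> n - 3"
    then have big: "n - 2 \<le> card Q" by linarith
    show False
    proof (cases "Q \<subseteq> ?Z")
      case False
      then have "odd (fcnt n l Q)" using gq unfolding goodQ_def by blast
      then have "subgee n l Q" by (rule odd_fcnt_subgee[OF gen n1])
      then have "card Q \<le> n - 3" by (rule subgee_card[OF gen n1])
      then show False using big n4 by linarith
    next
      case True
      obtain a where a: "a \<in> Q" using c2 by (metis card.empty ex_in_conv not_numeral_le_zero)
      have "card (Q - {a}) \<ge> 1" using c2 a fQ by simp
      then obtain b where b: "b \<in> Q - {a}" by (metis card.empty ex_in_conv not_one_le_zero)
      have ex: "\<exists>U. subgee n l U \<and> Q - {x} \<subseteq> U" if x: "x \<in> Q" for x
      proof -
        have "Q - {x} \<subseteq> Q" by blast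
        moreover have "Q - {x} \<noteq> Q" using x by blast
        moreover have "Q - {x} \<subseteq> ?Z" using True by blast
        ultimately have "odd (fcnt n l (Q - {x}))" using gq unfolding goodQ_def by blast
        then have "fcnt n l (Q - {x}) \<noteq> 0" by (metis even_zero)
        then have "{U. subgee n l U \<and> Q - {x} \<subseteq> U} \<noteq> {}" unfolding fcnt_def by (metis card.empty)
        then show ?thesis by blast
      qed
      obtain Ua where Ua: "subgee n l Ua" "Q - {a} \<subseteq> Ua" using ex[OF a] by blast
      obtain Ub where Ub: "subgee n l Ub" "Q - {b} \<subseteq> Ub" using ex b by blast
      have QU: "Q \<subseteq> Ua \<union> Ub" using Ua(2) Ub(2) b by blast
      have "{1..n-1} - (Ua \<union> Ub) \<subseteq> {1..n-1} - Q" using QU by blast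
      then have "card ({1..n-1} - (Ua \<union> Ub)) \<le> card ({1..n-1} - Q)"
        by (rule card_mono[rotated]) simp
      also have "card ({1..n-1} - Q) = (n - 1) - card Q"
        using Qsub by (simp add: card_Diff_subset fQ)
      finally have "card ({1..n-1} - (Ua \<union> Ub)) \<le> 1" using big by linarith
      moreover have "2 \<le> card ({1..n-1} - (Ua \<union> Ub))" by (rule two_subgees_miss[OF gen n1 Ua(1) Ub(1)])
      ultimately show False by linarith
    qed
  qed
  moreover have "?Z \<subseteq> Q" by blast
  ultimately show ?thesis using Qsub gq c2 by blast
qed



definition wd :: "nat list \<Rightarrow> nat \<Rightarrow> nat \<Rightarrow> nat \<Rightarrow> nat option list" where
  "wd xs t A L = map Some (take t xs) @ replicate A (Some (xs ! t)) @ replicate (L - A - t) None"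

lemma wd_length:
  assumes "length xs = t + 1" "t + A \<le> L"
  shows "length (wd xs t A L) = L"
  using assms unfolding wd_def by simp

lemma wd_nth:
  assumes "length xs = t + 1" "t + A \<le> L" "j < L"
  shows "wd xs t A L ! j = (if j < t then Some (xs ! j) else if j < t + A then Some (xs ! t) else None)"
proof -
  have lt: "length (map Some (take t xs)) = t" using assms(1) by simp
  show ?thesis
  proof (cases "j < t")
    case True
    then show ?thesis unfolding wd_def using lt assms(1) by (simp add: nth_append)
  next
    case False
    then have "wd xs t A L ! j = (replicate A (Some (xs ! t)) @ replicate (L - A - t) None) ! (j - t)"
      unfolding wd_def using lt by (simp add: nth_append)
    also have "\<dots> = (if j - t < A then Some (xs ! t) else None)"
      using assms(2,3) False by (simp add: nth_append)
    finally show ?thesis using False by auto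
  qed
qed

lemma wd_vidx:
  assumes "length xs = t + 1" "t + A \<le> L" "J \<subseteq> {..<L}"
  shows "i \<in> vidx (wd xs t A L) J \<longleftrightarrow> (\<exists>j\<in>J. j < t \<and> xs ! j = i) \<or> (i = xs ! t \<and> (\<exists>j\<in>J. t \<le> j \<and> j < t + A))"
proof -
  have len: "length (wd xs t A L) = L" by (rule wd_length[OF assms(1,2)])
  have "i \<in> vidx (wd xs t A L) J \<longleftrightarrow> (\<exists>j\<in>J. j < L \<and> wd xs t A L ! j = Some i)"
    unfolding vidx_def using len by simp
  also have "\<dots> \<longleftrightarrow> (\<exists>j\<in>J. (if j < t then Some (xs ! j) else if j < t + A then Some (xs ! t) else None) = Some i)"
  proof (rule bex_cong[OF refl])
    fix j assume jJ: "j \<in> J"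
    have "j \<in> {..<L}" using assms(3) jJ by (rule subsetD)
    then have jL: "j < L" by simp
    show "(j < L \<and> wd xs t A L ! j = Some i) \<longleftrightarrow> ((if j < t then Some (xs ! j) else if j < t + A then Some (xs ! t) else None) = Some i)"
      using jL by (simp only: wd_nth[OF assms(1,2) jL] simp_thms)
  qed
  also have "\<dots> \<longleftrightarrow> (\<exists>j\<in>J. j < t \<and> xs ! j = i) \<or> (i = xs ! t \<and> (\<exists>j\<in>J. t \<le> j \<and> j < t + A))"
  proof
    assume "\<exists>j\<in>J. (if j < t then Some (xs ! j) else if j < t + A then Some (xs ! t) else None) = Some i"
    then obtain j where jJ: "j \<in> J" and e: "(if j < t then Some (xs ! j) else if j < t + A then Some (xs ! t) else None) = Some i" by blast
    show "(\<exists>j\<in>J. j < t \<and> xs ! j = i) \<or> (i = xs ! t \<and> (\<exists>j\<in>J. t \<le> j \<and> j < t + A))"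
    proof (cases "j < t")
      case True
      then have "xs ! j = i" using e by simp
      then show ?thesis using True jJ by blast
    next
      case False
      show ?thesis
      proof (cases "j < t + A")
        case True
        then have "xs ! t = i" using e False by simp
        then show ?thesis using True False jJ by (intro disjI2) (auto intro!: bexI[of _ j])
      next
        case False2: False
        then show ?thesis using e False by simp
      qed
    qed
  next
    assume "(\<exists>j\<in>J. j < t \<and> xs ! j = i) \<or> (i = xs ! t \<and> (\<exists>j\<in>J. t \<le> j \<and> j < t + A))"
    then show "\<exists>j\<in>J. (if j < t then Some (xs ! j) else if j < t + A then Some (xs ! t) else None) = Some i"
    proof
      assume "\<exists>j\<in>J. j < t \<and> xs ! j = i"
      then obtain j where "j \<in> J" "j < t" "xs ! j = i" by blast
      then show ?thesis by (intro bexI[of _ j]) simp_all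
    next
      assume "i = xs ! t \<and> (\<exists>j\<in>J. t \<le> j \<and> j < t + A)"
      then obtain j where "j \<in> J" "t \<le> j" "j < t + A" "i = xs ! t" by blast
      then show ?thesis by (intro bexI[of _ j]) simp_all
    qed
  qed
  finally show ?thesis .
qed

lemma wd_vidx_sub:
  assumes "length xs = t + 1" "t + A \<le> L" "J \<subseteq> {..<L}"
  shows "vidx (wd xs t A L) J \<subseteq> set xs"
proof
  fix i assume "i \<in> vidx (wd xs t A L) J"
  then have "(\<exists>j\<in>J. j < t \<and> xs ! j = i) \<or> (i = xs ! t)" using wd_vidx[OF assms] by blast
  then show "i \<in> set xs" using assms(1) by (metis less_add_one nth_mem order.strict_trans)
qed

lemma wd_b:
  assumes "length xs = t + 1" "t + A \<le> L" "J \<subseteq> {..<L}" "distinct xs"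
  shows "xs ! t \<in> vidx (wd xs t A L) J \<longleftrightarrow> (\<exists>j\<in>J. t \<le> j \<and> j < t + A)"
proof -
  have "\<not> (\<exists>j\<in>J. j < t \<and> xs ! j = xs ! t)"
  proof
    assume "\<exists>j\<in>J. j < t \<and> xs ! j = xs ! t"
    then obtain j where j: "j < t" "xs ! j = xs ! t" by blast
    have "j < length xs" "t < length xs" using j(1) assms(1) by simp_all
    then have "j = t" using j(2) assms(4) by (simp add: nth_eq_iff_index_eq)
    then show False using j(1) by simp
  qed
  then show ?thesis using wd_vidx[OF assms(1-3)] by blast
qed

lemma wd_full:
  assumes "length xs = t + 1" "t + A \<le> L" "J \<subseteq> {..<L}" "distinct xs"
  shows "vidx (wd xs t A L) J = set xs \<longleftrightarrow> {..<t} \<subseteq> J \<and> (\<exists>j\<in>J. t \<le> j \<and> j < t + A)"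
proof
  assume eq: "vidx (wd xs t A L) J = set xs"
  have "{..<t} \<subseteq> J"
  proof
    fix j assume "j \<in> {..<t}"
    then have jt: "j < t" by simp
    then have "xs ! j \<in> set xs" using assms(1) by simp
    then have "xs ! j \<in> vidx (wd xs t A L) J" using eq by simp
    then have "(\<exists>j'\<in>J. j' < t \<and> xs ! j' = xs ! j) \<or> xs ! j = xs ! t" using wd_vidx[OF assms(1-3)] by blast
    moreover have "xs ! j \<noteq> xs ! t" using jt assms(1,4) by (simp add: nth_eq_iff_index_eq)
    moreover have "j' = j" if "j' < t" "xs ! j' = xs ! j" for j'
      using that jt assms(1,4) by (simp add: nth_eq_iff_index_eq)
    ultimately show "j \<in> J" by blast
  qed
  moreover have "xs ! t \<in> vidx (wd xs t A L) J" using eq assms(1) by simp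
  then have "\<exists>j\<in>J. t \<le> j \<and> j < t + A" using wd_b[OF assms] by blast
  ultimately show "{..<t} \<subseteq> J \<and> (\<exists>j\<in>J. t \<le> j \<and> j < t + A)" by blast
next
  assume r: "{..<t} \<subseteq> J \<and> (\<exists>j\<in>J. t \<le> j \<and> j < t + A)"
  show "vidx (wd xs t A L) J = set xs"
  proof
    show "vidx (wd xs t A L) J \<subseteq> set xs" by (rule wd_vidx_sub[OF assms(1-3)])
    show "set xs \<subseteq> vidx (wd xs t A L) J"
    proof
      fix i assume "i \<in> set xs"
      then obtain k where k: "k < t + 1" "xs ! k = i" using assms(1) by (metis in_set_conv_nth)
      show "i \<in> vidx (wd xs t A L) J"
      proof (cases "k < t")
        case True
        then have "k \<in> J" using r by blast
        then show ?thesis using wd_vidx[OF assms(1-3)] True k(2) by blast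
      next
        case False
        then have "k = t" using k(1) by simp
        then show ?thesis using wd_b[OF assms] r k(2) by blast
      qed
    qed
  qed
qed



section \<open>Case A: the powered letter is outside Z\<close>

lemma goodQ_P:
  assumes "goodQ n l Q Z" "S \<subseteq> Q"
  shows "odd (fcnt n l S) \<longleftrightarrow> ((S = Q) \<noteq> (S \<subseteq> Z))"
  using assms unfolding goodQ_def by blast

lemma caseA:
  assumes good: "goodQ n l (set xs) Z" and dist: "distinct xs" and len: "length xs = t + 1"
    and t0: "0 < t" and tm: "t < m" and bZ: "xs ! t \<notin> Z" and L: "L = 2 * m - 1"
  shows "{J. J \<subseteq> {..<L} \<and> card J = m \<and> odd (fcnt n l (vidx (wd xs t (m - t) L) J))
            \<and> odd (fcnt n l (vidx (wd xs t (m - t) L) ({..<L} - J)))} = {{..<m}}"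
    (is "?LHS = _")
proof -
  let ?A = "m - t"
  let ?w = "wd xs t ?A L"
  let ?Q = "set xs"
  have tA: "t + ?A = m" using tm by simp
  have tAL: "t + ?A \<le> L" using tA L tm by simp
  have A1: "1 \<le> ?A" using tm by simp
  have bQ: "xs ! t \<in> ?Q" using len by simp
  have QZ: "\<not> ?Q \<subseteq> Z" using bQ bZ by blast
  have Qne: "?Q \<noteq> {}" using bQ by (metis empty_iff)
  have P: "odd (fcnt n l S) \<longleftrightarrow> ((S = ?Q) \<noteq> (S \<subseteq> Z))" if "S \<subseteq> ?Q" for S
    by (rule goodQ_P[OF good that])
  have sub: "vidx ?w J \<subseteq> ?Q" if "J \<subseteq> {..<L}" for J
    by (rule wd_vidx_sub[OF len tAL that])
  have full: "vidx ?w J = ?Q \<longleftrightarrow> {..<t} \<subseteq> J \<and> (\<exists>j\<in>J. t \<le> j \<and> j < t + ?A)" if "J \<subseteq> {..<L}" for J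
    by (rule wd_full[OF len tAL that dist])
  have bmem: "xs ! t \<in> vidx ?w J \<longleftrightarrow> (\<exists>j\<in>J. t \<le> j \<and> j < t + ?A)" if "J \<subseteq> {..<L}" for J
    by (rule wd_b[OF len tAL that dist])
  have Jc: "{..<L} - J \<subseteq> {..<L}" for J by blast
  show ?thesis
  proof (rule set_eqI, rule iffI)
    fix J assume "J \<in> ?LHS"
    then have JL: "J \<subseteq> {..<L}" and cJ: "card J = m"
      and o1: "odd (fcnt n l (vidx ?w J))" and o2: "odd (fcnt n l (vidx ?w ({..<L} - J)))" by auto
    have fJ: "finite J" by (rule finite_subset[OF JL]) simp
    have P1: "(vidx ?w J = ?Q) \<noteq> (vidx ?w J \<subseteq> Z)" using P[OF sub[OF JL]] o1 by simp
    have P2: "(vidx ?w ({..<L} - J) = ?Q) \<noteq> (vidx ?w ({..<L} - J) \<subseteq> Z)" using P[OF sub[OF Jc]] o2 by simp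
    show "J \<in> {{..<m}}"
    proof (cases "vidx ?w J = ?Q")
      case True
      then have tJ: "{..<t} \<subseteq> J" using full[OF JL] by blast
      have "vidx ?w ({..<L} - J) \<noteq> ?Q"
      proof
        assume "vidx ?w ({..<L} - J) = ?Q"
        then have "{..<t} \<subseteq> {..<L} - J" using full[OF Jc] by blast
        moreover have "0 \<in> {..<t}" using t0 by simp
        ultimately show False using tJ by blast
      qed
      then have "vidx ?w ({..<L} - J) \<subseteq> Z" using P2 by simp
      then have "xs ! t \<notin> vidx ?w ({..<L} - J)" using bZ by blast
      then have nb: "\<not> (\<exists>j\<in>{..<L} - J. t \<le> j \<and> j < t + ?A)" using bmem[OF Jc] by blast
      have "{..<m} \<subseteq> J"
      proof
        fix j assume j: "j \<in> {..<m}"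
        show "j \<in> J"
        proof (cases "j < t")
          case True
          then show ?thesis using tJ by blast
        next
          case False
          then have "t \<le> j" "j < t + ?A" using j tA by simp_all
          moreover have "j < L" using j L tm by simp
          ultimately show ?thesis using nb by blast
        qed
      qed
      moreover have "card {..<m} = card J" using cJ by simp
      ultimately have "{..<m} = J" by (rule card_subset_eq[OF fJ])
      then show ?thesis by simp
    next
      case False
      then have "vidx ?w J \<subseteq> Z" using P1 by simp
      then have "xs ! t \<notin> vidx ?w J" using bZ by blast
      then have nb: "\<not> (\<exists>j\<in>J. t \<le> j \<and> j < t + ?A)" using bmem[OF JL] by blast
      have tL: "t < L" using L tm by simp
      have "t \<in> {..<L} - J" using nb tL A1 by auto
      then have "xs ! t \<in> vidx ?w ({..<L} - J)" using bmem[OF Jc] A1 by auto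
      then have "\<not> vidx ?w ({..<L} - J) \<subseteq> Z" using bZ by blast
      then have "vidx ?w ({..<L} - J) = ?Q" using P2 by simp
      then have tJc: "{..<t} \<subseteq> {..<L} - J" using full[OF Jc] by blast
      have "J \<subseteq> {..<L} - {..<m}"
      proof
        fix j assume jJ: "j \<in> J"
        have "j \<notin> {..<t}" using tJc jJ by blast
        moreover have "\<not> (t \<le> j \<and> j < t + ?A)" using nb jJ by blast
        moreover have "j < L" using JL jJ by blast
        ultimately show "j \<in> {..<L} - {..<m}" using tA by simp
      qed
      then have "card J \<le> card ({..<L} - {..<m})" by (rule card_mono[rotated]) simp
      also have "card ({..<L} - {..<m}) = L - m" using L tm by (simp add: card_Diff_subset)
      finally show ?thesis using cJ L tm by simp
    qed
  next
    fix J assume "J \<in> {{..<m}}"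
    then have J: "J = {..<m}" by simp
    have JL: "J \<subseteq> {..<L}" using J L tm by auto
    have cJ: "card J = m" using J by simp
    have "vidx ?w J = ?Q" using full[OF JL] J tA t0 A1 by auto
    then have o1: "odd (fcnt n l (vidx ?w J))" using P[of ?Q] QZ by simp
    have "vidx ?w ({..<L} - J) = {}"
    proof -
      have "i \<notin> vidx ?w ({..<L} - J)" for i
        using wd_vidx[OF len tAL Jc[of J], of i] J tA by auto
      then show ?thesis by blast
    qed
    then have o2: "odd (fcnt n l (vidx ?w ({..<L} - J)))" using P[of "{}"] Qne by simp
    show "J \<in> ?LHS" using JL cJ o1 o2 by simp
  qed
qed



lemma count_identity:
  fixes L m t :: nat and B :: "nat set"
  assumes t0: "0 < t" and Bt: "B \<inter> {..<t} = {}"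
  shows "card {J. (J \<subseteq> {..<L} \<and> card J = m) \<and> \<not> ({..<t} \<subseteq> J \<and> J \<inter> B \<noteq> {}) \<and> \<not> (J \<inter> {..<t} = {} \<and> \<not> B \<subseteq> J)}
       + card {J. (J \<subseteq> {..<L} \<and> card J = m) \<and> {..<t} \<subseteq> J}
       + card {J. (J \<subseteq> {..<L} \<and> card J = m) \<and> J \<inter> {..<t} = {}}
     = card {J. J \<subseteq> {..<L} \<and> card J = m}
       + card {J. (J \<subseteq> {..<L} \<and> card J = m) \<and> {..<t} \<subseteq> J \<and> J \<inter> B = {}}
       + card {J. (J \<subseteq> {..<L} \<and> card J = m) \<and> J \<inter> {..<t} = {} \<and> B \<subseteq> J}"
proof -
  let ?JJ = "{J. J \<subseteq> {..<L} \<and> card J = m}"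
  let ?E = "{J. (J \<subseteq> {..<L} \<and> card J = m) \<and> \<not> ({..<t} \<subseteq> J \<and> J \<inter> B \<noteq> {}) \<and> \<not> (J \<inter> {..<t} = {} \<and> \<not> B \<subseteq> J)}"
  let ?C1 = "{J. (J \<subseteq> {..<L} \<and> card J = m) \<and> {..<t} \<subseteq> J \<and> J \<inter> B \<noteq> {}}"
  let ?C2 = "{J. (J \<subseteq> {..<L} \<and> card J = m) \<and> J \<inter> {..<t} = {} \<and> \<not> B \<subseteq> J}"
  let ?U1 = "{J. (J \<subseteq> {..<L} \<and> card J = m) \<and> {..<t} \<subseteq> J}"
  let ?U2 = "{J. (J \<subseteq> {..<L} \<and> card J = m) \<and> J \<inter> {..<t} = {}}"
  let ?Y1 = "{J. (J \<subseteq> {..<L} \<and> card J = m) \<and> {..<t} \<subseteq> J \<and> J \<inter> B = {}}"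
  let ?Y2 = "{J. (J \<subseteq> {..<L} \<and> card J = m) \<and> J \<inter> {..<t} = {} \<and> B \<subseteq> J}"
  have fJJ: "finite ?JJ" by (rule finite_subset[of _ "Pow {..<L}"]) auto
  have fin: "finite X" if "X \<subseteq> ?JJ" for X using finite_subset[OF that fJJ] .
  have z: "0 \<in> {..<t}" using t0 by simp
  have d12: "?C1 \<inter> ?C2 = {}" using z by blast
  have e1: "?JJ = ?E \<union> (?C1 \<union> ?C2)" by blast
  have d1: "?E \<inter> (?C1 \<union> ?C2) = {}" by blast
  have c1: "card ?JJ = card ?E + (card ?C1 + card ?C2)"
  proof -
    have "card (?C1 \<union> ?C2) = card ?C1 + card ?C2"
      by (rule card_Un_disjoint[OF fin fin d12]) blast+
    moreover have "card (?E \<union> (?C1 \<union> ?C2)) = card ?E + card (?C1 \<union> ?C2)"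
      by (rule card_Un_disjoint[OF fin fin d1]) blast+
    ultimately show ?thesis using e1 by simp
  qed
  have c2: "card ?U1 = card ?C1 + card ?Y1"
  proof -
    have "?U1 = ?C1 \<union> ?Y1" by blast
    moreover have "?C1 \<inter> ?Y1 = {}" by blast
    ultimately show ?thesis using card_Un_disjoint[OF fin fin, of ?C1 ?Y1] by force
  qed
  have c3: "card ?U2 = card ?C2 + card ?Y2"
  proof -
    have "?U2 = ?C2 \<union> ?Y2" by blast
    moreover have "?C2 \<inter> ?Y2 = {}" by blast
    ultimately show ?thesis using card_Un_disjoint[OF fin fin, of ?C2 ?Y2] by force
  qed
  show ?thesis using c1 c2 c3 by linarith
qed



lemma Y1_empty:
  fixes L m t A :: nat
  assumes L: "L = 2 * m - 1" and mA: "m \<le> A" and tAL: "t + A \<le> L" and m1: "1 \<le> m"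
  shows "{J. (J \<subseteq> {..<L} \<and> card J = m) \<and> {..<t} \<subseteq> J \<and> J \<inter> {t..<t+A} = {}} = {}"
proof (rule ccontr)
  assume "\<not> ?thesis"
  then obtain J where J: "J \<subseteq> {..<L}" "card J = m" "J \<inter> {t..<t+A} = {}" by blast
  have "J \<subseteq> {..<L} - {t..<t+A}" using J by blast
  then have "card J \<le> card ({..<L} - {t..<t+A})" by (rule card_mono[rotated]) simp
  also have "card ({..<L} - {t..<t+A}) = L - A"
  proof -
    have "{t..<t+A} \<subseteq> {..<L}" using tAL by auto
    then show ?thesis by (simp add: card_Diff_subset)
  qed
  finally show False using J(2) L mA tAL m1 by linarith
qed

lemma Y2_big:
  fixes L m t A :: nat
  assumes mA: "m < A"
  shows "{J. (J \<subseteq> {..<L} \<and> card J = m) \<and> J \<inter> {..<t} = {} \<and> {t..<t+A} \<subseteq> J} = {}"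
proof (rule ccontr)
  assume "\<not> ?thesis"
  then obtain J where J: "J \<subseteq> {..<L}" "card J = m" "{t..<t+A} \<subseteq> J" by blast
  have "finite J" by (rule finite_subset[OF J(1)]) simp
  then have "card {t..<t+A} \<le> card J" using J(3) by (rule card_mono)
  then show False using J(2) mA by simp
qed

lemma Y2_eq:
  fixes L m t :: nat
  assumes tmL: "t + m \<le> L"
  shows "{J. (J \<subseteq> {..<L} \<and> card J = m) \<and> J \<inter> {..<t} = {} \<and> {t..<t+m} \<subseteq> J} = {{t..<t+m}}"
proof (rule set_eqI, rule iffI)
  fix J assume "J \<in> {J. (J \<subseteq> {..<L} \<and> card J = m) \<and> J \<inter> {..<t} = {} \<and> {t..<t+m} \<subseteq> J}"
  then have J: "J \<subseteq> {..<L}" "card J = m" "{t..<t+m} \<subseteq> J" by blast+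
  have fJ: "finite J" by (rule finite_subset[OF J(1)]) simp
  have "card {t..<t+m} = card J" using J(2) by simp
  then have "{t..<t+m} = J" by (rule card_subset_eq[OF fJ J(3)])
  then show "J \<in> {{t..<t+m}}" by simp
next
  fix J assume "J \<in> {{t..<t+m}}"
  then have J: "J = {t..<t+m}" by simp
  have "J \<subseteq> {..<L}" using J tmL by auto
  moreover have "card J = m" using J by simp
  moreover have "J \<inter> {..<t} = {}" using J by auto
  ultimately show "J \<in> {J. (J \<subseteq> {..<L} \<and> card J = m) \<and> J \<inter> {..<t} = {} \<and> {t..<t+m} \<subseteq> J}"
    using J by blast
qed

lemma sing_eq:
  fixes L m :: nat and X :: "nat set" and P :: "nat set \<Rightarrow> bool"
  assumes XL: "X \<subseteq> {..<L}" and cX: "card X = m" and PX: "P X"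
    and sub: "\<And>J. J \<subseteq> {..<L} \<Longrightarrow> card J = m \<Longrightarrow> P J \<Longrightarrow> J \<subseteq> X"
  shows "{J. (J \<subseteq> {..<L} \<and> card J = m) \<and> P J} = {X}"
proof (rule set_eqI, rule iffI)
  fix J assume "J \<in> {J. (J \<subseteq> {..<L} \<and> card J = m) \<and> P J}"
  then have J: "J \<subseteq> {..<L}" "card J = m" "P J" by blast+
  have fX: "finite X" by (rule finite_subset[OF XL]) simp
  have "J \<subseteq> X" by (rule sub[OF J])
  moreover have "card J = card X" using J(2) cX by simp
  ultimately have "J = X" by (rule card_subset_eq[OF fX])
  then show "J \<in> {X}" by simp
next
  fix J assume "J \<in> {X}"
  then show "J \<in> {J. (J \<subseteq> {..<L} \<and> card J = m) \<and> P J}" using XL cX PX by simp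
qed

lemma Y1_qm:
  fixes m :: nat
  assumes m2: "2 \<le> m"
  shows "{J. (J \<subseteq> {..<2*m-1} \<and> card J = m) \<and> {..<m-1} \<subseteq> J \<and> J \<inter> {m-1..<(m-1)+(m-1)} = {}}
     = {insert (2*m-2) {..<m-1}}"
proof (rule sing_eq)
  show "insert (2*m-2) {..<m-1} \<subseteq> {..<2*m-1}" using m2 by auto
  have "2*m-2 \<notin> {..<m-1}" using m2 by simp
  then show "card (insert (2*m-2) {..<m-1}) = m" using m2 by simp
  show "{..<m-1} \<subseteq> insert (2*m-2) {..<m-1} \<and> insert (2*m-2) {..<m-1} \<inter> {m-1..<(m-1)+(m-1)} = {}"
    using m2 by auto
next
  fix J assume J: "J \<subseteq> {..<2*m-1}" "card J = m"
    "{..<m-1} \<subseteq> J \<and> J \<inter> {m-1..<(m-1)+(m-1)} = {}"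
  show "J \<subseteq> insert (2*m-2) {..<m-1}"
  proof
    fix x assume x: "x \<in> J"
    then have "x < 2*m-1" using J(1) by blast
    moreover have "x \<notin> {m-1..<(m-1)+(m-1)}" using J(3) x by blast
    ultimately show "x \<in> insert (2*m-2) {..<m-1}" using m2 by auto
  qed
qed

lemma Y2_qm:
  fixes m :: nat
  assumes m2: "2 \<le> m"
  shows "{J. (J \<subseteq> {..<2*m-1} \<and> card J = m) \<and> J \<inter> {..<m-1} = {} \<and> {m-1..<(m-1)+(m-1)} \<subseteq> J}
     = {{m-1..<2*m-1}}"
proof (rule sing_eq)
  show "{m-1..<2*m-1} \<subseteq> {..<2*m-1}" by auto
  show "card {m-1..<2*m-1} = m" using m2 by simp
  show "{m-1..<2*m-1} \<inter> {..<m-1} = {} \<and> {m-1..<(m-1)+(m-1)} \<subseteq> {m-1..<2*m-1}"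
    using m2 by auto
next
  fix J assume J: "J \<subseteq> {..<2*m-1}" "card J = m"
    "J \<inter> {..<m-1} = {} \<and> {m-1..<(m-1)+(m-1)} \<subseteq> J"
  show "J \<subseteq> {m-1..<2*m-1}"
  proof
    fix x assume x: "x \<in> J"
    then have "x < 2*m-1" using J(1) by blast
    moreover have "x \<notin> {..<m-1}" using J(3) x by blast
    ultimately show "x \<in> {m-1..<2*m-1}" by simp
  qed
qed



lemma EA_set_eq:
  assumes good: "goodQ n l (set xs) Z" and QZ: "set xs \<subseteq> Z" and dist: "distinct xs"
    and len: "length xs = t + 1" and A1: "1 \<le> A" and tAL: "t + A \<le> L"
  shows "{J. J \<subseteq> {..<L} \<and> card J = m \<and> odd (fcnt n l (vidx (wd xs t A L) J))
            \<and> odd (fcnt n l (vidx (wd xs t A L) ({..<L} - J)))}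
       = {J. (J \<subseteq> {..<L} \<and> card J = m) \<and> \<not> ({..<t} \<subseteq> J \<and> J \<inter> {t..<t+A} \<noteq> {})
            \<and> \<not> (J \<inter> {..<t} = {} \<and> \<not> {t..<t+A} \<subseteq> J)}"
proof -
  let ?w = "wd xs t A L"
  let ?Q = "set xs"
  have P: "odd (fcnt n l S) \<longleftrightarrow> S \<noteq> ?Q" if "S \<subseteq> ?Q" for S
    using goodQ_P[OF good that] that QZ by auto
  have Jc: "{..<L} - J \<subseteq> {..<L}" for J by blast
  have r1: "odd (fcnt n l (vidx ?w J)) \<longleftrightarrow> \<not> ({..<t} \<subseteq> J \<and> J \<inter> {t..<t+A} \<noteq> {})"
    if JL: "J \<subseteq> {..<L}" for J
  proof -
    have "odd (fcnt n l (vidx ?w J)) \<longleftrightarrow> vidx ?w J \<noteq> ?Q"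
      by (rule P[OF wd_vidx_sub[OF len tAL JL]])
    moreover have "vidx ?w J = ?Q \<longleftrightarrow> {..<t} \<subseteq> J \<and> (\<exists>j\<in>J. t \<le> j \<and> j < t + A)"
      by (rule wd_full[OF len tAL JL dist])
    moreover have "(\<exists>j\<in>J. t \<le> j \<and> j < t + A) \<longleftrightarrow> J \<inter> {t..<t+A} \<noteq> {}" by auto
    ultimately show ?thesis by simp
  qed
  have r2: "odd (fcnt n l (vidx ?w ({..<L} - J))) \<longleftrightarrow> \<not> (J \<inter> {..<t} = {} \<and> \<not> {t..<t+A} \<subseteq> J)"
    if JL: "J \<subseteq> {..<L}" for J
  proof -
    have "odd (fcnt n l (vidx ?w ({..<L} - J))) \<longleftrightarrow> vidx ?w ({..<L} - J) \<noteq> ?Q"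
      by (rule P[OF wd_vidx_sub[OF len tAL Jc]])
    moreover have "vidx ?w ({..<L} - J) = ?Q \<longleftrightarrow> {..<t} \<subseteq> {..<L} - J \<and> (\<exists>j\<in>{..<L} - J. t \<le> j \<and> j < t + A)"
      by (rule wd_full[OF len tAL Jc dist])
    moreover have "{..<t} \<subseteq> {..<L} - J \<longleftrightarrow> J \<inter> {..<t} = {}" using tAL by auto
    moreover have "(\<exists>j\<in>{..<L} - J. t \<le> j \<and> j < t + A) \<longleftrightarrow> \<not> {t..<t+A} \<subseteq> J" using tAL by auto
    ultimately show ?thesis by simp
  qed
  show ?thesis
  proof (rule set_eqI, rule iffI)
    fix J assume "J \<in> {J. J \<subseteq> {..<L} \<and> card J = m \<and> odd (fcnt n l (vidx ?w J))
            \<and> odd (fcnt n l (vidx ?w ({..<L} - J)))}"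
    then have J: "J \<subseteq> {..<L}" "card J = m" "odd (fcnt n l (vidx ?w J))" "odd (fcnt n l (vidx ?w ({..<L} - J)))"
      by blast+
    then show "J \<in> {J. (J \<subseteq> {..<L} \<and> card J = m) \<and> \<not> ({..<t} \<subseteq> J \<and> J \<inter> {t..<t+A} \<noteq> {})
            \<and> \<not> (J \<inter> {..<t} = {} \<and> \<not> {t..<t+A} \<subseteq> J)}"
      using r1[OF J(1)] r2[OF J(1)] by blast
  next
    fix J assume "J \<in> {J. (J \<subseteq> {..<L} \<and> card J = m) \<and> \<not> ({..<t} \<subseteq> J \<and> J \<inter> {t..<t+A} \<noteq> {})
            \<and> \<not> (J \<inter> {..<t} = {} \<and> \<not> {t..<t+A} \<subseteq> J)}"
    then have J: "J \<subseteq> {..<L}" "card J = m" "\<not> ({..<t} \<subseteq> J \<and> J \<inter> {t..<t+A} \<noteq> {})"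
      "\<not> (J \<inter> {..<t} = {} \<and> \<not> {t..<t+A} \<subseteq> J)" by blast+
    then show "J \<in> {J. J \<subseteq> {..<L} \<and> card J = m \<and> odd (fcnt n l (vidx ?w J))
            \<and> odd (fcnt n l (vidx ?w ({..<L} - J)))}"
      using r1[OF J(1)] r2[OF J(1)] by blast
  qed
qed

lemma caseB:
  assumes good: "goodQ n l (set xs) Z" and QZ: "set xs \<subseteq> Z" and dist: "distinct xs"
    and len: "length xs = t + 1" and t0: "0 < t" and tm: "t + 1 \<le> m" and L: "L = 2 * m - 1"
  shows "\<exists>A. 0 < A \<and> t + A + 1 \<le> 2 * m \<and>
    odd (card {J. J \<subseteq> {..<L} \<and> card J = m \<and> odd (fcnt n l (vidx (wd xs t A L) J))
            \<and> odd (fcnt n l (vidx (wd xs t A L) ({..<L} - J)))})"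
proof -
  define EA where "EA A = card {J. J \<subseteq> {..<L} \<and> card J = m \<and> odd (fcnt n l (vidx (wd xs t A L) J))
            \<and> odd (fcnt n l (vidx (wd xs t A L) ({..<L} - J)))}" for A
  define C where "C = card {J. J \<subseteq> {..<L} \<and> card J = m}"
  define U1 where "U1 = card {J. (J \<subseteq> {..<L} \<and> card J = m) \<and> {..<t} \<subseteq> J}"
  define U2 where "U2 = card {J. (J \<subseteq> {..<L} \<and> card J = m) \<and> J \<inter> {..<t} = {}}"
  define Y1 where "Y1 A = card {J. (J \<subseteq> {..<L} \<and> card J = m) \<and> {..<t} \<subseteq> J \<and> J \<inter> {t..<t+A} = {}}" for A
  define Y2 where "Y2 A = card {J. (J \<subseteq> {..<L} \<and> card J = m) \<and> J \<inter> {..<t} = {} \<and> {t..<t+A} \<subseteq> J}" for A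
  have key: "EA A + U1 + U2 = C + Y1 A + Y2 A" if A1: "1 \<le> A" and tAL: "t + A \<le> L" for A
  proof -
    have Bt: "{t..<t+A} \<inter> {..<t} = {}" by auto
    have "EA A = card {J. (J \<subseteq> {..<L} \<and> card J = m) \<and> \<not> ({..<t} \<subseteq> J \<and> J \<inter> {t..<t+A} \<noteq> {})
            \<and> \<not> (J \<inter> {..<t} = {} \<and> \<not> {t..<t+A} \<subseteq> J)}"
      unfolding EA_def using EA_set_eq[OF good QZ dist len A1 tAL] by simp
    then show ?thesis using count_identity[OF t0 Bt, of L m]
      unfolding U1_def U2_def C_def Y1_def Y2_def by simp
  qed
  have m1: "1 \<le> m" using tm t0 by simp
  have tmL: "t + m \<le> L" using tm L by simp
  have km: "EA m + U1 + U2 = C + 0 + 1"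
  proof -
    have "Y1 m = 0" unfolding Y1_def using Y1_empty[OF L le_refl tmL m1] by simp
    moreover have "Y2 m = 1" unfolding Y2_def using Y2_eq[OF tmL] by simp
    ultimately show ?thesis using key[OF m1 tmL] by simp
  qed
  show ?thesis
  proof (cases "t + 1 < m")
    case True
    have tAL: "t + (m + 1) \<le> L" using True L by simp
    have "Y1 (m + 1) = 0" unfolding Y1_def using Y1_empty[OF L _ tAL m1] by simp
    moreover have "Y2 (m + 1) = 0" unfolding Y2_def using Y2_big[of m "m + 1"] by simp
    ultimately have k2: "EA (m + 1) + U1 + U2 = C" using key[of "m + 1"] tAL by simp
    have "odd (EA m) \<or> odd (EA (m + 1))" using km k2 by presburger
    then show ?thesis
    proof
      assume "odd (EA m)"
      then show ?thesis unfolding EA_def using m1 tm by (intro exI[of _ m]) simp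
    next
      assume "odd (EA (m + 1))"
      then show ?thesis unfolding EA_def using True by (intro exI[of _ "m + 1"]) simp
    qed
  next
    case False
    then have tm1: "t = m - 1" using tm by simp
    have m2: "2 \<le> m" using tm t0 by simp
    have A2: "1 \<le> m - 1" using m2 by simp
    have tAL: "t + (m - 1) \<le> L" using tm1 L m2 by simp
    have "Y1 (m - 1) = 1" unfolding Y1_def using Y1_qm[OF m2] tm1 L by simp
    moreover have "Y2 (m - 1) = 1" unfolding Y2_def using Y2_qm[OF m2] tm1 L by simp
    ultimately have k2: "EA (m - 1) + U1 + U2 = C + 2" using key[OF A2 tAL] by simp
    have "odd (EA m) \<or> odd (EA (m - 1))" using km k2 by presburger
    then show ?thesis
    proof
      assume "odd (EA m)"
      then show ?thesis unfolding EA_def using m1 tm by (intro exI[of _ m]) simp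
    next
      assume "odd (EA (m - 1))"
      then show ?thesis unfolding EA_def using m2 tm1 by (intro exI[of _ "m - 1"]) simp
    qed
  qed
qed



lemma odd_nonzero:
  assumes gen: "generic_length_vector n l" and n4: "4 \<le> n"
    and len: "length xs = t + 1" and tAL: "t + A \<le> 2 * (n - 3) - 1"
    and odd: "odd (card {J. J \<subseteq> {..<2 * (n - 3) - 1} \<and> card J = n - 3
            \<and> odd (fcnt n l (vidx (wd xs t A (2 * (n - 3) - 1)) J))
            \<and> odd (fcnt n l (vidx (wd xs t A (2 * (n - 3) - 1)) ({..<2 * (n - 3) - 1} - J)))})"
  shows "\<not> tensor_zero n l (barprod (map Some (take t xs) @ replicate A (Some (xs ! t))
                            @ replicate (2 * (n - 3) - A - t - 1) None))"
proof
  let ?L = "2 * (n - 3) - 1"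
  let ?w = "map Some (take t xs) @ replicate A (Some (xs ! t)) @ replicate (2 * (n - 3) - A - t - 1) None"
  assume tz: "tensor_zero n l (barprod ?w)"
  have weq: "?w = wd xs t A ?L"
  proof -
    have "2 * (n - 3) - A - t - 1 = ?L - A - t" by linarith
    then show ?thesis unfolding wd_def by simp
  qed
  have lw: "length ?w = ?L" using wd_length[OF len tAL] weq by simp
  have "{J. J \<subseteq> {..<length ?w} \<and> split_mon ?w J \<in> TPhi n l}
      = {J. J \<subseteq> {..<?L} \<and> card J = n - 3
            \<and> odd (fcnt n l (vidx (wd xs t A ?L) J))
            \<and> odd (fcnt n l (vidx (wd xs t A ?L) ({..<?L} - J)))}"
  proof (rule Collect_cong)
    fix J
    show "(J \<subseteq> {..<length ?w} \<and> split_mon ?w J \<in> TPhi n l) \<longleftrightarrow>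
          (J \<subseteq> {..<?L} \<and> card J = n - 3 \<and> odd (fcnt n l (vidx (wd xs t A ?L) J))
            \<and> odd (fcnt n l (vidx (wd xs t A ?L) ({..<?L} - J))))"
    proof (cases "J \<subseteq> {..<?L}")
      case True
      then show ?thesis using split_mon_TPhi[OF lw n4, of J l] lw weq wd_length[OF len tAL] by simp
    next
      case False
      then show ?thesis using lw by simp
    qed
  qed
  then have "odd (card {J. J \<subseteq> {..<length ?w} \<and> split_mon ?w J \<in> TPhi n l})" using odd by simp
  moreover have "even (card (barprod ?w \<inter> TPhi n l))" by (rule tensor_zero_even[OF gen n4 tz])
  ultimately show False using barprod_parity[of ?w "TPhi n l"] by simp
qed

theorem theorem1p5:
  fixes n :: nat and l :: "nat \<Rightarrow> real"
  assumes gen: "generic_length_vector n l"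
    and n4: "4 \<le> n"
    and Rm: "\<not> HK_zero n l {(n - 3, {})}"
  shows "((\<exists>k::nat. n - 3 = 2 ^ k) \<longrightarrow>
            \<not> tensor_zero n l (barprod (replicate (2 * (n - 3) - 1) None)))
       \<and> ((\<not> (\<exists>k::nat. n - 3 = 2 ^ k)) \<and> (\<exists>G. gee n l G \<and> G \<noteq> {}) \<longrightarrow>
            (\<exists>(t::nat) (A::nat) (is :: nat list).
               0 < t \<and> 0 < A \<and> A + t + 1 \<le> 2 * (n - 3) \<and>
               length is = t + 1 \<and> distinct is \<and> set is \<subseteq> {1..n-1} \<and>
               \<not> tensor_zero n l
                  (barprod (map Some (take t is) @ replicate A (Some (is ! t))
                            @ replicate (2 * (n - 3) - A - t - 1) None))))"
proof (intro conjI impI)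
  assume "\<exists>k::nat. n - 3 = 2 ^ k"
  then obtain k where "n - 3 = 2 ^ k" by blast
  then show "\<not> tensor_zero n l (barprod (replicate (2 * (n - 3) - 1) None))"
    by (rule part1[OF gen n4 Rm])
next
  assume "(\<not> (\<exists>k::nat. n - 3 = 2 ^ k)) \<and> (\<exists>G. gee n l G \<and> G \<noteq> {})"
  then obtain G where G: "gee n l G" "G \<noteq> {}" by blast
  obtain Q Z where Qsub: "Q \<subseteq> {1..n-1}" and good: "goodQ n l Q Z" and ZQ: "Z \<subseteq> Q"
    and c2: "2 \<le> card Q" and cm: "card Q \<le> n - 3"
    using exists_good[OF gen n4 Rm G] by blast
  define m where "m = n - 3"
  define L where "L = 2 * m - 1"
  define t where "t = card Q - 1"
  have fQ: "finite Q" by (rule finite_subset[OF Qsub]) simp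
  have t0: "0 < t" unfolding t_def using c2 by simp
  have tm: "t + 1 \<le> m" unfolding t_def m_def using c2 cm by simp
  show "\<exists>(t::nat) (A::nat) (is :: nat list).
               0 < t \<and> 0 < A \<and> A + t + 1 \<le> 2 * (n - 3) \<and>
               length is = t + 1 \<and> distinct is \<and> set is \<subseteq> {1..n-1} \<and>
               \<not> tensor_zero n l
                  (barprod (map Some (take t is) @ replicate A (Some (is ! t))
                            @ replicate (2 * (n - 3) - A - t - 1) None))"
  proof (cases "Q \<subseteq> Z")
    case False
    then obtain b where b: "b \<in> Q" "b \<notin> Z" by blast
    define xs where "xs = sorted_list_of_set (Q - {b}) @ [b]"
    have fQb: "finite (Q - {b})" using fQ by simp
    have lxs1: "length (sorted_list_of_set (Q - {b})) = t"
      unfolding t_def using fQb b(1) fQ by (simp add: card_Diff_singleton)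
    have len: "length xs = t + 1" unfolding xs_def using lxs1 by simp
    have dist: "distinct xs" unfolding xs_def using fQb by simp
    have sxs: "set xs = Q" unfolding xs_def using fQb b(1) by auto
    have xt: "xs ! t = b" unfolding xs_def using lxs1 by (simp add: nth_append)
    have good': "goodQ n l (set xs) Z" using good sxs by simp
    have tlm: "t < m" using tm by simp
    have cA: "{J. J \<subseteq> {..<L} \<and> card J = m \<and> odd (fcnt n l (vidx (wd xs t (m - t) L) J))
            \<and> odd (fcnt n l (vidx (wd xs t (m - t) L) ({..<L} - J)))} = {{..<m}}"
      by (rule caseA[OF good' dist len t0 tlm]) (use xt b(2) L_def in simp_all)
    have tAL: "t + (m - t) \<le> 2 * (n - 3) - 1" using tm unfolding m_def by simp
    have nz: "\<not> tensor_zero n l (barprod (map Some (take t xs) @ replicate (m - t) (Some (xs ! t))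
                            @ replicate (2 * (n - 3) - (m - t) - t - 1) None))"
      by (rule odd_nonzero[OF gen n4 len tAL]) (use cA in \<open>simp add: L_def m_def\<close>)
    show ?thesis
      using nz t0 tm dist len sxs Qsub unfolding m_def
      by (intro exI[of _ t] exI[of _ "n - 3 - t"] exI[of _ xs]) simp
  next
    case True
    define xs where "xs = sorted_list_of_set Q"
    have len: "length xs = t + 1" unfolding xs_def t_def using c2 fQ by simp
    have dist: "distinct xs" unfolding xs_def using fQ by simp
    have sxs: "set xs = Q" unfolding xs_def using fQ by simp
    have good': "goodQ n l (set xs) Z" using good sxs by simp
    have QZ': "set xs \<subseteq> Z" using True sxs by simp
    obtain A where A: "0 < A" "t + A + 1 \<le> 2 * m"
      and oA: "odd (card {J. J \<subseteq> {..<L} \<and> card J = m \<and> odd (fcnt n l (vidx (wd xs t A L) J))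
            \<and> odd (fcnt n l (vidx (wd xs t A L) ({..<L} - J)))})"
      using caseB[OF good' QZ' dist len t0 tm L_def] by blast
    have tAL: "t + A \<le> 2 * (n - 3) - 1" using A(2) unfolding m_def by simp
    have nz: "\<not> tensor_zero n l (barprod (map Some (take t xs) @ replicate A (Some (xs ! t))
                            @ replicate (2 * (n - 3) - A - t - 1) None))"
      by (rule odd_nonzero[OF gen n4 len tAL]) (use oA in \<open>simp add: L_def m_def\<close>)
    show ?thesis
      using nz t0 A dist len sxs Qsub unfolding m_def
      by (intro exI[of _ t] exI[of _ A] exI[of _ xs]) simp
  qed
qed


end
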